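(* Let $l\in\mathbb N-\frac12$ and let $V$ be a weight $(\mathbb Ch+\tilde{\mathcal H}^{(l)})$-module having a nonzero finite dimensional weight space, on which $z$ acts as a nonzero scalar. Then $V$ contains a $(\mathbb Ch+\tilde{\mathcal H}^{(l)})$-submodule that is simple as an $\tilde{\mathcal H}^{(l)}$-module and all of whose weight spaces are finite dimensional.
   Context: For $l\in\mathbb N-\frac12$, $\tilde{\mathcal H}^{(l)}$ has basis $p_0,\dots,p_{2l},z$ with $z$ central and $[p_k,p_{k'}]=\delta_{k+k',2l}(-1)^{k+l+\frac12}k!(2l-k)!\,z$; the Lie algebra $\mathbb Ch+\tilde{\mathcal H}^{(l)}$ has additionally $[h,p_k]=2(l-k)p_k$, $[h,z]=0$. A weight module is one on which $h$ acts diagonalizably, with weight spaces $V_\lambda=\{v:hv=\lambda v\}$. *)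

theory Defs
  imports Complex_Main
begin

text \<open>A representation of the Lie algebra  C h + H~(l)  with  l = n - 1/2  (n \<ge> 1), so 2l = 2n-1,
  on a complex vector space carried by the type 'v with scalar multiplication sc.
  Basis elements act by: H (for h), P k for k = 0..2l (i.e. k < 2n), Z (for z).\<close>

definition heis_rep ::
  "(complex \<Rightarrow> 'v::ab_group_add \<Rightarrow> 'v) \<Rightarrow> nat \<Rightarrow> ('v \<Rightarrow> 'v) \<Rightarrow> (nat \<Rightarrow> 'v \<Rightarrow> 'v) \<Rightarrow> ('v \<Rightarrow> 'v) \<Rightarrow> bool"
where
  "heis_rep sc n H P Z \<longleftrightarrow>
     vector_space sc \<and>
     Vector_Spaces.linear sc sc H \<and> (\<forall>k<2*n. Vector_Spaces.linear sc sc (P k)) \<and>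
     Vector_Spaces.linear sc sc Z \<and>
     (\<forall>k<2*n. \<forall>v. H (P k v) - P k (H v)
                    = sc (2 * (of_nat n - 1/2 - of_nat k)) (P k v)) \<and>
     (\<forall>v. H (Z v) - Z (H v) = 0) \<and>
     (\<forall>k<2*n. \<forall>v. P k (Z v) - Z (P k v) = 0) \<and>
     (\<forall>k<2*n. \<forall>k'<2*n. \<forall>v. P k (P k' v) - P k' (P k v)
        = (if k + k' = 2*n - 1
           then sc ((-1) ^ (k + n) * of_nat (fact k * fact (2*n - 1 - k))) (Z v)
           else 0))"

definition weight_space :: "(complex \<Rightarrow> 'v \<Rightarrow> 'v) \<Rightarrow> ('v \<Rightarrow> 'v) \<Rightarrow> complex \<Rightarrow> 'v set" where
  "weight_space sc H lam = {v. H v = sc lam v}"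

definition weight_module :: "(complex \<Rightarrow> 'v::ab_group_add \<Rightarrow> 'v) \<Rightarrow> ('v \<Rightarrow> 'v) \<Rightarrow> bool" where
  "weight_module sc H \<longleftrightarrow>
     (\<forall>v. \<exists>\<Lambda> f. finite \<Lambda> \<and> (\<forall>\<mu>\<in>\<Lambda>. f \<mu> \<in> weight_space sc H \<mu>) \<and> v = (\<Sum>\<mu>\<in>\<Lambda>. f \<mu>))"

definition fin_dim :: "(complex \<Rightarrow> 'v::ab_group_add \<Rightarrow> 'v) \<Rightarrow> 'v set \<Rightarrow> bool" where
  "fin_dim sc S \<longleftrightarrow> (\<exists>B. finite B \<and> S \<subseteq> module.span sc B)"

definition heis_submodule ::
  "(complex \<Rightarrow> 'v::ab_group_add \<Rightarrow> 'v) \<Rightarrow> nat \<Rightarrow> (nat \<Rightarrow> 'v \<Rightarrow> 'v) \<Rightarrow> ('v \<Rightarrow> 'v) \<Rightarrow> 'v set \<Rightarrow> bool"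
where
  "heis_submodule sc n P Z W \<longleftrightarrow>
     module.subspace sc W \<and> (\<forall>k<2*n. P k ` W \<subseteq> W) \<and> Z ` W \<subseteq> W"

definition full_submodule ::
  "(complex \<Rightarrow> 'v::ab_group_add \<Rightarrow> 'v) \<Rightarrow> nat \<Rightarrow> ('v \<Rightarrow> 'v) \<Rightarrow> (nat \<Rightarrow> 'v \<Rightarrow> 'v) \<Rightarrow> ('v \<Rightarrow> 'v) \<Rightarrow> 'v set \<Rightarrow> bool"
where
  "full_submodule sc n H P Z W \<longleftrightarrow> heis_submodule sc n P Z W \<and> H ` W \<subseteq> W"

definition heis_simple ::
  "(complex \<Rightarrow> 'v::ab_group_add \<Rightarrow> 'v) \<Rightarrow> nat \<Rightarrow> (nat \<Rightarrow> 'v \<Rightarrow> 'v) \<Rightarrow> ('v \<Rightarrow> 'v) \<Rightarrow> 'v set \<Rightarrow> bool"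
where
  "heis_simple sc n P Z W \<longleftrightarrow>
     heis_submodule sc n P Z W \<and> W \<noteq> {0} \<and>
     (\<forall>U. U \<subseteq> W \<and> heis_submodule sc n P Z U \<longrightarrow> U = {0} \<or> U = W)"

end

theory Submission
  imports Defs "HOL-Computational_Algebra.Fundamental_Theorem_Algebra"
begin

definition pev :: "('a::zero \<Rightarrow> 'b::ab_group_add \<Rightarrow> 'b) \<Rightarrow> 'a poly \<Rightarrow> ('b \<Rightarrow> 'b) \<Rightarrow> 'b \<Rightarrow> 'b" where
  "pev sc p T u = fold_coeffs (\<lambda>a f u. sc a u + T (f u)) p (\<lambda>u. 0) u"

context vector_space
begin

lemma span_image_repr:
  assumes "finite I" "u \<in> span (f ` I)"
  shows "\<exists>c. u = (\<Sum>i\<in>I. c i *s f i)"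
  using assms
proof (induction I arbitrary: u rule: finite_induct)
  case empty
  then show ?case by simp
next
  case (insert a I)
  from insert.prems obtain k where k: "u - k *s f a \<in> span (f ` I)"
    by (auto simp: span_insert)
  from insert.IH[OF k] obtain c where c: "u - k *s f a = (\<Sum>i\<in>I. c i *s f i)" by blast
  have "(\<Sum>i\<in>I. (c(a:=k)) i *s f i) = (\<Sum>i\<in>I. c i *s f i)"
    using insert.hyps by (intro sum.cong) auto
  then show ?case using insert.hyps c
    by (intro exI[of _ "c(a:=k)"]) (auto simp: algebra_simps)
qed

lemma proj_lemma:
  assumes fin: "finite I" and u: "u \<in> span (f ` I)"
    and T: "module_hom scale scale T"
    and eig: "\<And>i. i \<in> I \<Longrightarrow> T (f i) = e i *s f i"
    and Tu: "T u = \<mu> *s u"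
  shows "u \<in> span (f ` {i\<in>I. e i = \<mu>})"
  using fin u eig Tu
proof (induction "card {i\<in>I. e i \<noteq> \<mu>}" arbitrary: I u rule: less_induct)
  case less
  interpret T: module_hom scale scale T by fact
  show ?case
  proof (cases "{i\<in>I. e i \<noteq> \<mu>} = {}")
    case True
    then have "{i\<in>I. e i = \<mu>} = I" by auto
    then show ?thesis using less.prems by simp
  next
    case False
    then obtain i0 where i0: "i0 \<in> I" "e i0 \<noteq> \<mu>" by auto
    define J where "J = {i\<in>I. e i \<noteq> e i0}"
    from span_image_repr[OF less.prems(1,2)] obtain c where c: "u = (\<Sum>i\<in>I. c i *s f i)" by blast
    have "T u - e i0 *s u = (\<Sum>i\<in>I. (c i * (e i - e i0)) *s f i)"
      unfolding c using less.prems(3)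
      by (simp add: T.sum T.scale scale_sum_right sum_subtractf[symmetric] algebra_simps)
    also have "\<dots> \<in> span (f ` J)"
    proof (intro span_sum)
      fix i assume "i \<in> I"
      show "(c i * (e i - e i0)) *s f i \<in> span (f ` J)"
      proof (cases "e i = e i0")
        case True then show ?thesis by (simp add: span_zero)
      next
        case False then show ?thesis using \<open>i \<in> I\<close>
          by (intro span_scale span_base) (auto simp: J_def)
      qed
    qed
    finally have "(\<mu> - e i0) *s u \<in> span (f ` J)" using less.prems(4) by (simp add: scale_left_diff_distrib)
    then have "(1 / (\<mu> - e i0)) *s ((\<mu> - e i0) *s u) \<in> span (f ` J)" by (rule span_scale)
    then have uJ: "u \<in> span (f ` J)" using i0 by simp
    have sub: "{i\<in>J. e i \<noteq> \<mu>} \<subset> {i\<in>I. e i \<noteq> \<mu>}"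
      using i0 by (auto simp: J_def)
    have "card {i\<in>J. e i \<noteq> \<mu>} < card {i\<in>I. e i \<noteq> \<mu>}"
      by (rule psubset_card_mono) (use less.prems(1) sub in auto)
    from less.hyps[OF this _ uJ] less.prems(1,3,4)
    have "u \<in> span (f ` {i\<in>J. e i = \<mu>})" by (auto simp: J_def)
    moreover have "f ` {i\<in>J. e i = \<mu>} \<subseteq> f ` {i\<in>I. e i = \<mu>}" by (auto simp: J_def)
    ultimately show ?thesis using span_mono by blast
  qed
qed


lemma pe_0[simp]: "pev scale 0 T u = 0"
  by (simp add: pev_def)

lemma pe_pCons:
  assumes "module_hom scale scale T"
  shows "pev scale (pCons a p) T u = a *s u + T (pev scale p T u)"
proof -
  interpret T: module_hom scale scale T by fact
  show ?thesis
  proof (cases "p = 0 \<and> a = 0")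
    case True then show ?thesis by (simp add: pev_def)
  next
    case False
    then have "fold_coeffs (\<lambda>a f u. a *s u + T (f u)) (pCons a p) =
       (\<lambda>a f u. a *s u + T (f u)) a \<circ> fold_coeffs (\<lambda>a f u. a *s u + T (f u)) p"
      by (cases "p = 0") auto
    then show ?thesis by (simp add: pev_def)
  qed
qed

lemma pe_linear:
  assumes "module_hom scale scale T"
  shows "pev scale p T (x + y) = pev scale p T x + pev scale p T y" "pev scale p T (c *s x) = c *s pev scale p T x"
    "pev scale p T 0 = 0"
proof -
  interpret T: module_hom scale scale T by fact
  show "pev scale p T (x + y) = pev scale p T x + pev scale p T y"
    by (induction p) (simp_all add: pe_pCons[OF assms] T.add algebra_simps)
  show "pev scale p T (c *s x) = c *s pev scale p T x"
    by (induction p) (simp_all add: pe_pCons[OF assms] T.add T.scale algebra_simps)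
  show "pev scale p T 0 = 0"
    by (induction p) (simp_all add: pe_pCons[OF assms])
qed

lemma pe_hom:
  assumes "module_hom scale scale T"
  shows "module_hom scale scale (pev scale p T)"
  using pe_linear[OF assms] by unfold_locales auto

lemma pe_add:
  assumes "module_hom scale scale T"
  shows "pev scale (p + q) T u = pev scale p T u + pev scale q T u"
proof -
  interpret T: module_hom scale scale T by fact
  show ?thesis
  proof (induction p arbitrary: q)
    case 0 then show ?case by simp
  next
    case (pCons a p)
    show ?case
    proof (cases q rule: pCons_cases)
      case (pCons b q')
      have "pev scale (p + q') T u = pev scale p T u + pev scale q' T u"
        using pCons.IH[of q'] by (simp add: add.commute)
      then show ?thesis
        by (simp add: pCons pe_pCons[OF assms] T.add algebra_simps)
    qed
  qed
qed

lemma pe_smult: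
  assumes "module_hom scale scale T"
  shows "pev scale (smult c p) T u = c *s pev scale p T u"
proof -
  interpret T: module_hom scale scale T by fact
  show ?thesis
    by (induction p) (simp_all add: pe_pCons[OF assms] T.scale algebra_simps)
qed

lemma pe_mult:
  assumes "module_hom scale scale T"
  shows "pev scale (p * q) T u = pev scale p T (pev scale q T u)"
proof -
  interpret T: module_hom scale scale T by fact
  show ?thesis
    by (induction p) (simp_all add: pe_pCons[OF assms] pe_add[OF assms] pe_smult[OF assms])
qed

lemma pe_monom:
  assumes "module_hom scale scale T"
  shows "pev scale (monom a k) T u = a *s (T ^^ k) u"
proof -
  interpret T: module_hom scale scale T by fact
  show ?thesis
    by (induction k) (simp_all add: monom_0 monom_Suc pe_pCons[OF assms] T.scale)
qed

lemma pe_sum: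
  assumes "module_hom scale scale T"
  shows "pev scale (\<Sum>i\<in>K. p i) T u = (\<Sum>i\<in>K. pev scale (p i) T u)"
  by (induction K rule: infinite_finite_induct) (simp_all add: pe_add[OF assms])

lemma pe_subspace:
  assumes "module_hom scale scale T" "subspace S" "T ` S \<subseteq> S" "u \<in> S"
  shows "pev scale p T u \<in> S"
  by (induction p) (use assms in \<open>auto simp: pe_pCons[OF assms(1)] subspace_add subspace_scale subspace_0\<close>)

lemma funpow_subspace:
  assumes "T ` S \<subseteq> S" "u \<in> S"
  shows "(T ^^ k) u \<in> S"
  by (induction k) (use assms in auto)

lemma exists_annihilator:
  assumes T: "module_hom scale scale T" and S: "subspace S" "T ` S \<subseteq> S"
    and B: "finite B" "S \<subseteq> span B" and u: "u \<in> S"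
  shows "\<exists>p. p \<noteq> 0 \<and> pev scale p T u = 0"
proof (rule ccontr)
  assume nex: "\<not> ?thesis"
  define d where "d = card B"
  define g where "g k = (T ^^ k) u" for k
  have inj: "inj_on g {0..d}"
  proof (rule inj_onI, rule ccontr)
    fix a b assume ab: "a \<in> {0..d}" "b \<in> {0..d}" "g a = g b" "a \<noteq> b"
    have "monom (1::'a) a - monom 1 b \<noteq> 0"
      using ab(4) by (metis coeff_monom diff_zero eq_iff_diff_eq_0 zero_neq_one coeff_diff)
    moreover have "pev scale (monom 1 a - monom 1 b) T u = 0"
      using ab(3) pe_add[OF T, of "monom 1 a" "- monom 1 b"] pe_smult[OF T, of "-1" "monom 1 b"]
      by (simp add: pe_monom[OF T] g_def)
    ultimately show False using nex by blast
  qed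
  have indep: "independent (g ` {0..d})"
  proof
    assume "dependent (g ` {0..d})"
    then obtain t c where t: "finite t" "t \<subseteq> g ` {0..d}" "(\<Sum>v\<in>t. c v *s v) = 0" "\<exists>v\<in>t. c v \<noteq> 0"
      unfolding dependent_explicit by blast
    define K where "K = {k\<in>{0..d}. g k \<in> t}"
    have tK: "t = g ` K" using t(2) by (auto simp: K_def)
    have injK: "inj_on g K" using inj by (rule inj_on_subset) (auto simp: K_def)
    define p where "p = (\<Sum>k\<in>K. monom (c (g k)) k)"
    have "pev scale p T u = (\<Sum>k\<in>K. c (g k) *s g k)"
      by (simp add: p_def pe_sum[OF T] pe_monom[OF T] g_def)
    also have "\<dots> = (\<Sum>v\<in>t. c v *s v)"
      unfolding tK by (simp add: sum.reindex[OF injK])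
    finally have pz: "pev scale p T u = 0" using t(3) by simp
    obtain k0 where k0: "k0 \<in> K" "c (g k0) \<noteq> 0" using t(4) tK by auto
    have "coeff p k0 = (\<Sum>k\<in>K. if k = k0 then c (g k) else 0)"
      by (simp add: p_def coeff_sum coeff_monom)
    also have "\<dots> = c (g k0)"
      using k0 by (simp add: sum.delta' K_def)
    finally have "p \<noteq> 0" using k0 by auto
    then show False using nex pz by blast
  qed
  have "g ` {0..d} \<subseteq> span B"
    using funpow_subspace[OF S(2) u] B(2) by (auto simp: g_def)
  from independent_span_bound[OF B(1) indep this]
  have "card (g ` {0..d}) \<le> card B" by simp
  moreover have "card (g ` {0..d}) = d + 1" using card_image[OF inj] by simp
  ultimately show False by (simp add: d_def)
qed

end

lemma eigen_from_annihilator: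
  fixes scale :: "complex \<Rightarrow> 'b::ab_group_add \<Rightarrow> 'b"
  assumes vs: "vector_space scale" and T: "module_hom scale scale T" and S: "module.subspace scale S" "T ` S \<subseteq> S"
    and u: "u \<in> S" "u \<noteq> 0" and p: "p \<noteq> 0" "pev scale p T u = 0"
  shows "\<exists>x\<in>S. x \<noteq> 0 \<and> (\<exists>r. T x = scale r x)"
  using p
proof -
  interpret vector_space scale by fact
  show ?thesis using p
proof (induction "degree p" arbitrary: p rule: less_induct)
  case less
  show ?case
  proof (cases "degree p = 0")
    case True
    then obtain a where "p = [:a:]" by (metis degree_eq_zeroE)
    with less.prems have "a \<noteq> 0" "scale a u = 0"
      by (auto simp: pe_pCons[OF T] module_hom.zero[OF T])
    then show ?thesis using u T by (simp add: module_hom.zero)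
  next
    case False
    then have "\<not> constant (poly p)" by (simp add: constant_degree)
    then obtain r where "poly p r = 0" using fundamental_theorem_of_algebra by blast
    then obtain q where q: "p = [:-r, 1:] * q" by (auto simp: poly_eq_0_iff_dvd dvd_def)
    with less.prems have q0: "q \<noteq> 0" by auto
    have "degree p = degree [:-r, 1::complex:] + degree q"
      unfolding q by (rule degree_mult_eq) (use q0 in auto)
    then have dq: "degree q < degree p" by simp
    define y where "y = pev scale q T u"
    have "pev scale p T u = pev scale [:-r,1:] T y" unfolding q y_def by (rule pe_mult[OF T])
    also have "\<dots> = scale (- r) y + T y" by (simp add: pe_pCons[OF T] module_hom.zero[OF T])
    finally have "pev scale p T u = scale (- r) y + T y" .
    with less.prems have Ty: "T y = scale r y" by (simp add: add_eq_0_iff)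
    show ?thesis
    proof (cases "y = 0")
      case True
      then show ?thesis using less.hyps[OF dq q0] by (simp add: y_def)
    next
      case False
      moreover have "y \<in> S" unfolding y_def by (rule pe_subspace[OF T S u(1)])
      ultimately show ?thesis using Ty by blast
    qed
  qed
qed
qed

lemma eigen_exists:
  fixes scale :: "complex \<Rightarrow> 'b::ab_group_add \<Rightarrow> 'b"
  assumes vs: "vector_space scale" and T: "module_hom scale scale T" and S: "module.subspace scale S" "T ` S \<subseteq> S"
    and B: "finite B" "S \<subseteq> module.span scale B" and ne: "S \<noteq> {0}"
  shows "\<exists>x\<in>S. x \<noteq> 0 \<and> (\<exists>r. T x = scale r x)"
proof -
  interpret vector_space scale by fact
  from ne S obtain u where u: "u \<in> S" "u \<noteq> 0" by (auto simp: subspace_0)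
  from exists_annihilator[OF T S B u(1)] obtain p where "p \<noteq> 0" "pev scale p T u = 0" by blast
  from eigen_from_annihilator[OF vs T S u this] show ?thesis .
qed


lemma (in vector_space) no_inf_eigen_family:
  fixes f :: "nat \<Rightarrow> 'b"
  assumes B: "finite B" and fB: "\<And>k. f k \<in> span B"
    and T: "module_hom scale scale T"
    and nz: "\<And>k. f k \<noteq> 0" and eig: "\<And>k. T (f k) = e k *s f k" and inj: "inj e"
  shows False
proof -
  define d where "d = card B"
  have injf: "inj_on f {0..d}"
  proof (rule inj_onI)
    fix a b assume "a \<in> {0..d}" "b \<in> {0..d}" "f a = f b"
    then have "e a *s f a = e b *s f a" using eig[of a] eig[of b] by metis
    then have "(e a - e b) *s f a = 0" by (simp add: scale_left_diff_distrib del: scale_cancel_right)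
    then have "e a = e b" using nz[of a] by simp
    then show "a = b" using inj by (simp add: inj_eq)
  qed
  have indep: "independent (f ` {0..d})"
  proof
    assume "dependent (f ` {0..d})"
    then obtain j where j: "j \<in> {0..d}" "f j \<in> span (f ` {0..d} - {f j})"
      unfolding dependent_def by blast
    have eq: "f ` {0..d} - {f j} = f ` ({0..d} - {j})" using injf j(1)
      by (auto simp: inj_on_def)
    have "f j \<in> span (f ` {i\<in>{0..d} - {j}. e i = e j})"
      by (rule proj_lemma[OF _ _ T]) (use j eq eig in auto)
    moreover have "{i\<in>{0..d} - {j}. e i = e j} = {}" using inj by (auto simp: inj_eq)
    ultimately have "f j \<in> span {}" by (metis image_empty)
    then have "f j = 0" by (simp add: span_empty)
    then show False using nz by blast
  qed
  from independent_span_bound[OF B indep] fB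
  have "card (f ` {0..d}) \<le> card B" by auto
  moreover have "card (f ` {0..d}) = d + 1" using card_image[OF injf] by simp
  ultimately show False by (simp add: d_def)
qed

lemma common_eigen:
  fixes scale :: "complex \<Rightarrow> 'b::ab_group_add \<Rightarrow> 'b" and N :: nat and Ts :: "nat \<Rightarrow> 'b \<Rightarrow> 'b"
  assumes vs: "vector_space scale"
    and T: "\<And>i. i < N \<Longrightarrow> module_hom scale scale (Ts i)"
    and comm: "\<And>i j x. i < N \<Longrightarrow> j < N \<Longrightarrow> Ts i (Ts j x) = Ts j (Ts i x)"
    and S: "module.subspace scale S" "\<And>i. i < N \<Longrightarrow> Ts i ` S \<subseteq> S"
    and B: "finite B" "S \<subseteq> module.span scale B" and ne: "S \<noteq> {0}"
  shows "\<exists>x\<in>S. x \<noteq> 0 \<and> (\<forall>i<N. \<exists>r. Ts i x = scale r x)"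
proof -
  interpret vector_space scale by fact
  have "m \<le> N \<Longrightarrow> \<exists>S'. S' \<subseteq> S \<and> subspace S' \<and> S' \<noteq> {0} \<and> (\<forall>i<N. Ts i ` S' \<subseteq> S')
          \<and> (\<forall>i<m. \<exists>r. \<forall>x\<in>S'. Ts i x = scale r x)" for m
  proof (induction m)
    case 0
    then show ?case using S ne by blast
  next
    case (Suc m)
    then obtain S' where S': "S' \<subseteq> S" "subspace S'" "S' \<noteq> {0}" "\<forall>i<N. Ts i ` S' \<subseteq> S'"
      "\<forall>i<m. \<exists>r. \<forall>x\<in>S'. Ts i x = scale r x" by auto
    have mN: "m < N" using Suc.prems by simp
    interpret Tm: module_hom scale scale "Ts m" using T[OF mN] .
    obtain x r where x: "x \<in> S'" "x \<noteq> 0" "Ts m x = scale r x"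
      using eigen_exists[OF vs T[OF mN] S'(2) S'(4)[rule_format, OF mN] B(1)] S'(1,3) B(2) by blast
    define S'' where "S'' = S' \<inter> {y. Ts m y = scale r y}"
    have sub: "subspace S''" unfolding S''_def
      using S'(2) by (auto simp: subspace_def Tm.add Tm.scale algebra_simps)
    have pres: "\<forall>i<N. Ts i ` S'' \<subseteq> S''"
    proof (intro allI impI subsetI)
      fix i y assume i: "i < N" and "y \<in> Ts i ` S''"
      then obtain z where z: "z \<in> S''" "y = Ts i z" by auto
      interpret Ti: module_hom scale scale "Ts i" using T[OF i] .
      have "Ts m y = scale r y" using z comm[OF mN i, of z] by (simp add: S''_def Ti.scale)
      moreover have "y \<in> S'" using z S'(4) i by (auto simp: S''_def)
      ultimately show "y \<in> S''" by (simp add: S''_def)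
    qed
    have "x \<in> S''" using x by (simp add: S''_def)
    then have "S'' \<noteq> {0}" using x(2) by auto
    moreover have "\<forall>i<Suc m. \<exists>r. \<forall>x\<in>S''. Ts i x = scale r x"
      using S'(5) by (auto simp: S''_def less_Suc_eq)
    ultimately show ?case using sub pres S'(1) by (intro exI[of _ S'']) (auto simp: S''_def)
  qed
  from this[of N] obtain S' where S': "S' \<subseteq> S" "subspace S'" "S' \<noteq> {0}"
    "\<forall>i<N. \<exists>r. \<forall>x\<in>S'. Ts i x = scale r x" by auto
  from S'(2,3) obtain x where "x \<in> S'" "x \<noteq> 0" by (auto simp: subspace_0)
  then show ?thesis using S' by blast
qed


fun wordap :: "(nat \<Rightarrow> 'v \<Rightarrow> 'v) \<Rightarrow> nat list \<Rightarrow> 'v \<Rightarrow> 'v" where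
  "wordap F [] x = x"
| "wordap F (i # is) x = F i (wordap F is x)"

definition good :: "(complex \<Rightarrow> 'v::ab_group_add \<Rightarrow> 'v) \<Rightarrow> nat \<Rightarrow> ('v \<Rightarrow> 'v) \<Rightarrow> (nat \<Rightarrow> 'v \<Rightarrow> 'v)
   \<Rightarrow> (nat \<Rightarrow> 'v \<Rightarrow> 'v) \<Rightarrow> 'v set \<Rightarrow> bool" where
  "good sc n H A B W \<longleftrightarrow> module.subspace sc W \<and> (\<forall>i<n. A i ` W \<subseteq> W \<and> B i ` W \<subseteq> W) \<and> H ` W \<subseteq> W
     \<and> W \<noteq> {0}
     \<and> (\<forall>U. U \<subseteq> W \<and> module.subspace sc U \<and> (\<forall>i<n. A i ` U \<subseteq> U \<and> B i ` U \<subseteq> U) \<longrightarrow> U = {0} \<or> U = W)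
     \<and> (\<forall>\<nu>. \<exists>F. finite F \<and> W \<inter> {x. H x = sc \<nu> x} \<subseteq> module.span sc F)"

locale weyl =
  fixes sc :: "complex \<Rightarrow> 'v::ab_group_add \<Rightarrow> 'v"
    and n :: nat and H :: "'v \<Rightarrow> 'v" and A B :: "nat \<Rightarrow> 'v \<Rightarrow> 'v"
    and gg :: "nat \<Rightarrow> complex" and w :: "nat \<Rightarrow> nat"
  assumes vs: "vector_space sc"
    and linH: "module_hom sc sc H"
    and linA: "i < n \<Longrightarrow> module_hom sc sc (A i)"
    and linB: "i < n \<Longrightarrow> module_hom sc sc (B i)"
    and gnz: "i < n \<Longrightarrow> gg i \<noteq> 0"
    and wpos: "i < n \<Longrightarrow> w i \<ge> 1"
    and HA: "i < n \<Longrightarrow> H (A i x) = A i (H x) + sc (of_nat (w i)) (A i x)"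
    and HB: "i < n \<Longrightarrow> H (B i x) = B i (H x) - sc (of_nat (w i)) (B i x)"
    and AB: "i < n \<Longrightarrow> k < n \<Longrightarrow> A i (B k x) = B k (A i x) + (if i = k then sc (gg i) x else 0)"
    and AA: "i < n \<Longrightarrow> k < n \<Longrightarrow> A i (A k x) = A k (A i x)"
    and BB: "i < n \<Longrightarrow> k < n \<Longrightarrow> B i (B k x) = B k (B i x)"
begin

sublocale vector_space sc by (rule vs)

lemma A_add: "i < n \<Longrightarrow> A i (x + y) = A i x + A i y"
  and A_scale: "i < n \<Longrightarrow> A i (sc c x) = sc c (A i x)"
  and A_zero: "i < n \<Longrightarrow> A i 0 = 0"
  and A_diff: "i < n \<Longrightarrow> A i (x - y) = A i x - A i y"
  and A_sum: "i < n \<Longrightarrow> A i (sum f K) = (\<Sum>k\<in>K. A i (f k))"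
  using linA[of i] by (auto simp: module_hom.add module_hom.scale module_hom.zero module_hom.diff module_hom.sum)

lemma B_add: "i < n \<Longrightarrow> B i (x + y) = B i x + B i y"
  and B_scale: "i < n \<Longrightarrow> B i (sc c x) = sc c (B i x)"
  and B_zero: "i < n \<Longrightarrow> B i 0 = 0"
  and B_diff: "i < n \<Longrightarrow> B i (x - y) = B i x - B i y"
  and B_sum: "i < n \<Longrightarrow> B i (sum f K) = (\<Sum>k\<in>K. B i (f k))"
  using linB[of i] by (auto simp: module_hom.add module_hom.scale module_hom.zero module_hom.diff module_hom.sum)

lemma H_add: "H (x + y) = H x + H y"
  and H_scale: "H (sc c x) = sc c (H x)"
  and H_zero: "H 0 = 0"
  and H_diff: "H (x - y) = H x - H y"
  using linH by (auto simp: module_hom.add module_hom.scale module_hom.zero module_hom.diff)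

lemma swap: "weyl sc n (\<lambda>x. - H x) B A (\<lambda>i. - gg i) w"
proof -
  have h1: "module_hom sc sc (\<lambda>x. - H x)"
    using linH by unfold_locales (auto simp: H_add H_scale)
  have h2: "- H (B i x) = B i (- H x) + sc (of_nat (w i)) (B i x)" if "i < n" for i x
    using HB[OF that, of x] that by (simp add: module_hom.neg[OF linB[OF that]])
  have h3: "- H (A i x) = A i (- H x) - sc (of_nat (w i)) (A i x)" if "i < n" for i x
    using HA[OF that, of x] that by (simp add: module_hom.neg[OF linA[OF that]])
  have h4: "B i (A k x) = A k (B i x) + (if i = k then sc (- gg i) x else 0)" if "i < n" "k < n" for i k x
    using AB[OF that(2,1), of x] by auto
  show ?thesis
    unfolding weyl_def using vs h1 h2 h3 h4 linA linB gnz wpos AA BB by auto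
qed

lemma good_swap: "good sc n (\<lambda>x. - H x) B A W \<Longrightarrow> good sc n H A B W"
proof -
  assume G: "good sc n (\<lambda>x. - H x) B A W"
  have sub: "subspace W" using G by (simp add: good_def)
  have "H ` W \<subseteq> W"
  proof
    fix y assume "y \<in> H ` W"
    then obtain x where "x \<in> W" "y = H x" by auto
    moreover have "- H x \<in> W" using G \<open>x \<in> W\<close> by (auto simp: good_def)
    ultimately show "y \<in> W" using sub subspace_neg by fastforce
  qed
  moreover have "{x. - H x = sc (- \<nu>) x} = {x. H x = sc \<nu> x}" for \<nu>
    by (auto simp: minus_equation_iff)
  ultimately show ?thesis using G unfolding good_def
    by (auto, metis, metis)
qed

end

context weyl
begin

lemma hom_span:
  assumes T: "module_hom sc sc T" and X: "T ` X \<subseteq> span Y" and x: "x \<in> span X"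
  shows "T x \<in> span Y"
proof -
  have "T x \<in> T ` span X" using x by auto
  also have "\<dots> = span (T ` X)" using module_hom.span_image[OF T] by simp
  also have "\<dots> \<subseteq> span Y" using X span_mono span_span by blast
  finally show ?thesis .
qed

lemma span_image_finite_sub:
  assumes "x \<in> span (f ` S)"
  shows "\<exists>C\<subseteq>S. finite C \<and> x \<in> span (f ` C)"
proof -
  from assms obtain t r where t: "x = (\<Sum>a\<in>t. sc (r a) a)" "finite t" "t \<subseteq> f ` S"
    unfolding span_explicit by blast
  from finite_subset_image[OF t(2,3)] obtain C where C: "C \<subseteq> S" "finite C" "t = f ` C" by blast
  have "x \<in> span t" unfolding t(1) by (intro span_sum span_scale span_base)
  then show ?thesis using C by blast
qed

definition E where
  "E x = (\<Sum>i<n. sc (1 / gg i) (B i (A i x)))"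

lemma E_hom: "module_hom sc sc E"
proof
  fix x y c
  show "E (x + y) = E x + E y"
    by (simp add: E_def A_add B_add scale_right_distrib sum.distrib)
  show "E (sc c x) = sc c (E x)"
    by (simp add: E_def A_scale B_scale scale_sum_right mult.commute)
qed

lemma E_B:
  assumes k: "k < n"
  shows "E (B k y) = B k (E y) + B k y"
proof -
  have "E (B k y) = (\<Sum>i<n. sc (1 / gg i) (B i (B k (A i y) + (if i = k then sc (gg i) y else 0))))"
    by (simp add: E_def AB k)
  also have "\<dots> = (\<Sum>i<n. B k (sc (1 / gg i) (B i (A i y))) + (if i = k then B k y else 0))"
  proof (intro sum.cong refl)
    fix i assume i: "i \<in> {..<n}"
    then have i': "i < n" by simp
    show "sc (1 / gg i) (B i (B k (A i y) + (if i = k then sc (gg i) y else 0)))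
        = B k (sc (1 / gg i) (B i (A i y))) + (if i = k then B k y else 0)"
      using gnz[OF i'] by (auto simp: B_add B_scale B_zero i' k BB scale_right_distrib)
  qed
  also have "\<dots> = B k (E y) + B k y"
    by (simp add: sum.distrib E_def B_sum k k[THEN lessThan_iff[THEN iffD2]])
  finally show ?thesis .
qed

end

locale hw = weyl +
  fixes v and \<mu> :: complex
  assumes v0: "v \<noteq> 0" and Hv: "H v = sc \<mu> v" and Av: "\<And>i. i < n \<Longrightarrow> A i v = 0"
begin

definition Xs :: "nat \<Rightarrow> nat list set" where "Xs d = {is. set is \<subseteq> {..<n} \<and> length is \<le> d}"
definition fv where "fv is = wordap B is v"
definition Wd where "Wd d = span (fv ` Xs d)"
definition Wall where "Wall = span (fv ` {is. set is \<subseteq> {..<n}})"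

lemma fv_Cons[simp]: "fv (i # is) = B i (fv is)" and fv_Nil[simp]: "fv [] = v"
  by (simp_all add: fv_def)

lemma finite_Xs: "finite (Xs d)"
  unfolding Xs_def by (rule finite_lists_length_le) simp

lemma fv_H: "set is \<subseteq> {..<n} \<Longrightarrow> H (fv is) = sc (\<mu> - of_nat (sum_list (map w is))) (fv is)"
proof (induction "is")
  case Nil then show ?case by (simp add: Hv)
next
  case (Cons i "is")
  then have i: "i < n" by simp
  have "H (fv (i#is)) = B i (H (fv is)) - sc (of_nat (w i)) (B i (fv is))" by (simp add: HB i)
  also have "\<dots> = sc (\<mu> - of_nat (sum_list (map w is))) (B i (fv is)) - sc (of_nat (w i)) (B i (fv is))"
    using Cons by (simp add: B_scale i)
  also have "\<dots> = sc ((\<mu> - of_nat (sum_list (map w is))) - of_nat (w i)) (fv (i#is))"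
    by (simp only: scale_left_diff_distrib fv_Cons)
  also have "(\<mu> - of_nat (sum_list (map w is))) - of_nat (w i) = \<mu> - of_nat (sum_list (map w (i#is)))"
    by simp
  finally show ?case .
qed

lemma fv_E: "set is \<subseteq> {..<n} \<Longrightarrow> E (fv is) = sc (of_nat (length is)) (fv is)"
proof (induction "is")
  case Nil then show ?case by (simp add: E_def Av B_zero)
next
  case (Cons i "is")
  then have i: "i < n" by simp
  with Cons show ?case
    by (simp add: E_B B_scale scale_left_distrib algebra_simps)
qed

lemma B_Wd:
  assumes k: "k < n" and x: "x \<in> Wd d" shows "B k x \<in> Wd (Suc d)"
proof -
  have "B k ` fv ` Xs d \<subseteq> span (fv ` Xs (Suc d))"
  proof
    fix y assume "y \<in> B k ` fv ` Xs d"
    then obtain "is" where "is \<in> Xs d" "y = fv (k # is)" by auto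
    moreover have "k # is \<in> Xs (Suc d)" using \<open>is \<in> Xs d\<close> k by (auto simp: Xs_def)
    then have "fv (k # is) \<in> fv ` Xs (Suc d)" by (rule imageI)
    ultimately show "y \<in> span (fv ` Xs (Suc d))" by (metis span_base)
  qed
  then show ?thesis using hom_span[OF linB[OF k] _ x[unfolded Wd_def]] by (simp add: Wd_def)
qed

lemma Wd_mono: "d \<le> d' \<Longrightarrow> Wd d \<subseteq> Wd d'"
  unfolding Wd_def Xs_def by (intro span_mono image_mono) auto

lemma fv_Wd: "set is \<subseteq> {..<n} \<Longrightarrow> fv is \<in> Wd (length is)"
  unfolding Wd_def Xs_def by (intro span_base) auto

lemma A_fv: "i < n \<Longrightarrow> set is \<subseteq> {..<n} \<Longrightarrow> A i (fv is) \<in> Wd (length is - 1) \<and> (is = [] \<longrightarrow> A i (fv is) = 0)"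
proof (induction "is")
  case Nil then show ?case by (simp add: Av span_zero Wd_def)
next
  case (Cons k js)
  then have k: "k < n" and js: "set js \<subseteq> {..<n}" by auto
  have "A i (fv (k # js)) = B k (A i (fv js)) + (if i = k then sc (gg i) (fv js) else 0)"
    by (simp add: AB Cons.prems k)
  moreover have "B k (A i (fv js)) \<in> Wd (length js)"
  proof (cases js)
    case Nil then show ?thesis using Cons by (simp add: Av B_zero Wd_def span_zero)
  next
    case (Cons a list)
    then show ?thesis using B_Wd[OF k, of "A i (fv js)" "length js - 1"] Cons.IH \<open>i < n\<close> js by simp
  qed
  moreover have "(if i = k then sc (gg i) (fv js) else 0) \<in> Wd (length js)"
    using fv_Wd[OF js] by (auto simp: Wd_def span_zero span_scale)
  ultimately show ?case by (simp add: Wd_def span_add)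
qed

lemma A_Wd:
  assumes i: "i < n" and x: "x \<in> Wd (Suc d)" shows "A i x \<in> Wd d"
proof -
  have "A i ` fv ` Xs (Suc d) \<subseteq> span (fv ` Xs d)"
  proof
    fix y assume "y \<in> A i ` fv ` Xs (Suc d)"
    then obtain "is" where hh: "is \<in> Xs (Suc d)" "y = A i (fv is)" by auto
    then have "y \<in> Wd (length is - 1)" using A_fv[OF i] by (auto simp: Xs_def)
    moreover have "Wd (length is - 1) \<subseteq> Wd d" using hh by (intro Wd_mono) (auto simp: Xs_def)
    ultimately show "y \<in> span (fv ` Xs d)" by (auto simp: Wd_def)
  qed
  then show ?thesis using hom_span[OF linA[OF i] _ x[unfolded Wd_def]] by (simp add: Wd_def)
qed


lemma Xs0: "Xs 0 = {[]}" by (auto simp: Xs_def)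

lemma A_Wd0: assumes i: "i < n" and x: "x \<in> Wd 0" shows "A i x = 0"
proof -
  have "A i ` fv ` Xs 0 \<subseteq> span {}" using Av[OF i] by (simp add: Xs0)
  from hom_span[OF linA[OF i] this x[unfolded Wd_def]] show ?thesis by simp
qed

lemma aw_Wd:
  assumes x: "x \<in> Wd d"
  shows "set js \<subseteq> {..<n} \<Longrightarrow> wordap A js x \<in> Wd (d - length js) \<and> (d < length js \<longrightarrow> wordap A js x = 0)"
proof (induction js)
  case Nil then show ?case using x by simp
next
  case (Cons i js)
  then have i: "i < n" and js: "set js \<subseteq> {..<n}" by auto
  from Cons.IH[OF js] have IH: "wordap A js x \<in> Wd (d - length js)" by blast
  show ?case
  proof (cases "d - length js")
    case 0
    then have "wordap A (i # js) x = 0" using A_Wd0[OF i] IH by simp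
    then show ?thesis by (simp add: Wd_def span_zero)
  next
    case (Suc m)
    then have "wordap A (i # js) x \<in> Wd m" using A_Wd[OF i] IH by simp
    moreover have "d - length (i # js) = m" using Suc by simp
    moreover have "\<not> d < length (i # js)" using Suc by simp
    ultimately show ?thesis by simp
  qed
qed

lemma fv_Wall: "set is \<subseteq> {..<n} \<Longrightarrow> fv is \<in> Wall"
  unfolding Wall_def by (intro span_base) auto

lemma Wd_Wall: "Wd d \<subseteq> Wall"
  unfolding Wd_def Wall_def Xs_def by (intro span_mono image_mono) auto

lemma Wall_Wd: assumes "x \<in> Wall" shows "\<exists>d. x \<in> Wd d"
proof -
  from span_image_finite_sub[OF assms[unfolded Wall_def]] obtain C where
    C: "C \<subseteq> {is. set is \<subseteq> {..<n}}" "finite C" "x \<in> span (fv ` C)" by blast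
  define d where "d = Max (insert 0 (length ` C))"
  have "C \<subseteq> Xs d" using C(1,2) by (auto simp: Xs_def d_def)
  then have "span (fv ` C) \<subseteq> Wd d" unfolding Wd_def by (intro span_mono image_mono)
  then show ?thesis using C(3) by blast
qed

lemma len_le_sumw: "set is \<subseteq> {..<n} \<Longrightarrow> length is \<le> sum_list (map w is)"
  by (induction "is") (auto dest: wpos)

lemma stable_Wall: "i < n \<Longrightarrow> A i ` Wall \<subseteq> Wall \<and> B i ` Wall \<subseteq> Wall" and H_Wall: "H ` Wall \<subseteq> Wall"
proof -
  assume i: "i < n"
  have "A i ` fv ` {is. set is \<subseteq> {..<n}} \<subseteq> Wall"
    using A_fv[OF i] Wd_Wall by blast
  then have a: "A i ` Wall \<subseteq> Wall"
    using hom_span[OF linA[OF i], of _ "fv ` {is. set is \<subseteq> {..<n}}"] by (auto simp: Wall_def)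
  have "B i ` fv ` {is. set is \<subseteq> {..<n}} \<subseteq> Wall"
    using fv_Wall[of "i # _"] i by auto
  then have b: "B i ` Wall \<subseteq> Wall"
    using hom_span[OF linB[OF i], of _ "fv ` {is. set is \<subseteq> {..<n}}"] by (auto simp: Wall_def)
  show "A i ` Wall \<subseteq> Wall \<and> B i ` Wall \<subseteq> Wall" using a b by blast
next
  have "H ` fv ` {is. set is \<subseteq> {..<n}} \<subseteq> Wall"
  proof
    fix y assume "y \<in> H ` fv ` {is. set is \<subseteq> {..<n}}"
    then obtain "is" where "set is \<subseteq> {..<n}" "y = H (fv is)" by auto
    then show "y \<in> Wall" using fv_H fv_Wall by (auto simp: Wall_def intro: span_scale)
  qed
  then show "H ` Wall \<subseteq> Wall"
    using hom_span[OF linH, of _ "fv ` {is. set is \<subseteq> {..<n}}"] by (auto simp: Wall_def)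
qed

lemma Wall_weight_fin: "\<exists>F. finite F \<and> Wall \<inter> {x. H x = sc \<nu> x} \<subseteq> span F"
proof -
  define M where "M = {is. set is \<subseteq> {..<n} \<and> of_nat (sum_list (map w is)) = \<mu> - \<nu>}"
  have finM: "finite M"
  proof (cases "M = {}")
    case False
    then obtain is0 where is0: "is0 \<in> M" by auto
    have "M \<subseteq> {is. set is \<subseteq> {..<n} \<and> length is \<le> sum_list (map w is0)}"
    proof
      fix "is" assume "is \<in> M"
      then have "sum_list (map w is) = sum_list (map w is0)" "set is \<subseteq> {..<n}"
        using is0 by (auto simp: M_def) (metis of_nat_eq_iff)
      then show "is \<in> {is. set is \<subseteq> {..<n} \<and> length is \<le> sum_list (map w is0)}"
        using len_le_sumw[of "is"] by auto
    qed
    moreover have "finite {is. set is \<subseteq> {..<n} \<and> length is \<le> sum_list (map w is0)}"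
      by (rule finite_lists_length_le) simp
    ultimately show ?thesis by (rule finite_subset)
  qed simp
  have "Wall \<inter> {x. H x = sc \<nu> x} \<subseteq> span (fv ` M)"
  proof
    fix x assume x: "x \<in> Wall \<inter> {x. H x = sc \<nu> x}"
    from span_image_finite_sub[of x fv "{is. set is \<subseteq> {..<n}}"] x obtain C where
      C: "C \<subseteq> {is. set is \<subseteq> {..<n}}" "finite C" "x \<in> span (fv ` C)" by (auto simp: Wall_def)
    have "x \<in> span (fv ` {is\<in>C. \<mu> - of_nat (sum_list (map w is)) = \<nu>})"
      by (rule proj_lemma[OF C(2) C(3) linH]) (use C(1) fv_H x in auto)
    moreover have "{is\<in>C. \<mu> - of_nat (sum_list (map w is)) = \<nu>} \<subseteq> M"
      using C(1) by (auto simp: M_def)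
    ultimately show "x \<in> span (fv ` M)" by (meson image_mono span_mono subsetD)
  qed
  then show ?thesis using finM by blast
qed

lemma aw_stable:
  assumes "\<forall>i<n. A i ` U \<subseteq> U" "x \<in> U"
  shows "set js \<subseteq> {..<n} \<Longrightarrow> wordap A js x \<in> U"
  by (induction js) (use assms in auto)

lemma bw_stable:
  assumes "\<forall>i<n. B i ` U \<subseteq> U" "v \<in> U"
  shows "set is \<subseteq> {..<n} \<Longrightarrow> fv is \<in> U"
  by (induction "is") (use assms in auto)

lemma Wall_simple:
  assumes U: "U \<subseteq> Wall" "subspace U" "\<forall>i<n. A i ` U \<subseteq> U \<and> B i ` U \<subseteq> U" "U \<noteq> {0}"
  shows "U = Wall"
proof -
  from U(2,4) obtain u where u: "u \<in> U" "u \<noteq> 0" by (auto simp: subspace_0)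
  from Wall_Wd u U(1) obtain d where d: "u \<in> Wd d" by blast
  define L where "L = {js. set js \<subseteq> {..<n} \<and> wordap A js u \<noteq> 0}"
  have Lb: "\<forall>js\<in>L. length js \<le> d"
  proof
    fix js assume "js \<in> L"
    then have "set js \<subseteq> {..<n}" "wordap A js u \<noteq> 0" by (auto simp: L_def)
    with aw_Wd[OF d] show "length js \<le> d" by (meson not_le)
  qed
  have "[] \<in> L" using u by (simp add: L_def)
  define m where "m = Max (length ` L)"
  have finl: "finite (length ` L)" using Lb finite_subset[of "length ` L" "{..d}"] by auto
  have "m \<in> length ` L" unfolding m_def using \<open>[] \<in> L\<close> finl by (intro Max_in) auto
  then obtain js where js: "js \<in> L" "length js = m" by auto
  have maxl: "length js' \<le> m" if "js' \<in> L" for js' unfolding m_def using finl that by auto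
  define u' where "u' = wordap A js u"
  have u'0: "u' \<noteq> 0" using js by (simp add: L_def u'_def)
  have u'U: "u' \<in> U" unfolding u'_def using aw_stable[of U u js] U(3) u js by (auto simp: L_def)
  have u'W: "u' \<in> Wd (d - length js)" unfolding u'_def using aw_Wd[OF d] js by (auto simp: L_def)
  have Au': "A i u' = 0" if i: "i < n" for i
  proof (rule ccontr)
    assume "A i u' \<noteq> 0"
    then have "i # js \<in> L" using i js by (auto simp: L_def u'_def)
    from maxl[OF this] js show False by simp
  qed
  have Eu': "E u' = sc 0 u'" by (simp add: E_def Au' B_zero)
  have "u' \<in> span (fv ` {is\<in>Xs (d - length js). of_nat (length is) = (0::complex)})"
    by (rule proj_lemma[OF finite_Xs u'W[unfolded Wd_def] E_hom _ Eu']) (auto simp: Xs_def fv_E)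
  moreover have "{is\<in>Xs (d - length js). of_nat (length is) = (0::complex)} = {[]}"
    by (auto simp: Xs_def)
  ultimately have "u' \<in> span {v}" by simp
  then obtain c where c: "u' = sc c v" by (auto simp: span_singleton)
  with u'0 have c0: "c \<noteq> 0" by auto
  have "sc (1 / c) u' \<in> U" using u'U U(2) by (rule subspace_scale[rotated])
  then have vU: "v \<in> U" using c c0 by simp
  have "fv ` {is. set is \<subseteq> {..<n}} \<subseteq> U" using bw_stable[of U] U(3) vU by auto
  then have "Wall \<subseteq> U" unfolding Wall_def using span_minimal U(2) by blast
  then show ?thesis using U(1) by blast
qed

theorem hw_good: "good sc n H A B Wall"
proof -
  have "subspace Wall" by (simp add: Wall_def)
  moreover have "\<forall>i<n. A i ` Wall \<subseteq> Wall \<and> B i ` Wall \<subseteq> Wall" using stable_Wall by blast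
  moreover have "Wall \<noteq> {0}" using fv_Wall[of "[]"] v0 by auto
  moreover have "\<forall>\<nu>. \<exists>F. finite F \<and> Wall \<inter> {x. H x = sc \<nu> x} \<subseteq> span F" using Wall_weight_fin by blast
  moreover have "\<forall>U. U \<subseteq> Wall \<and> subspace U \<and> (\<forall>i<n. A i ` U \<subseteq> U \<and> B i ` U \<subseteq> U) \<longrightarrow> U = {0} \<or> U = Wall"
    using Wall_simple by blast
  ultimately show ?thesis unfolding good_def using H_Wall by blast
qed

end

context weyl
begin

lemma extract_lemma:
  assumes fin: "finite C" and u: "u \<in> span (f ` C)" "u \<noteq> 0" "u \<in> U"
    and U: "subspace U" "T ` U \<subseteq> U" and T: "module_hom sc sc T"
    and eig: "\<And>m. T (f m) = sc (e m) (f m)" and inj: "inj e"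
  shows "\<exists>m\<in>C. f m \<in> U"
  using fin u
proof (induction "card C" arbitrary: C u rule: less_induct)
  case less
  interpret T: module_hom sc sc T by fact
  have "C \<noteq> {}" using less.prems by auto
  then obtain m0 where m0: "m0 \<in> C" by auto
  from span_image_repr[OF less.prems(1,2)] obtain c where c: "u = (\<Sum>i\<in>C. sc (c i) (f i))" by blast
  define u' where "u' = T u - sc (e m0) u"
  have u'U: "u' \<in> U" unfolding u'_def using less.prems(4) U by (auto simp: subspace_diff subspace_scale)
  have "u' = (\<Sum>i\<in>C. sc (c i) (T (f i)) - sc (e m0) (sc (c i) (f i)))"
    unfolding u'_def c by (simp add: T.sum T.scale scale_sum_right sum_subtractf)
  also have "\<dots> = (\<Sum>i\<in>C. sc (c i * (e i - e m0)) (f i))"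
    by (rule sum.cong) (simp_all add: eig algebra_simps)
  also have "\<dots> \<in> span (f ` (C - {m0}))"
  proof (intro span_sum)
    fix i assume "i \<in> C"
    show "sc (c i * (e i - e m0)) (f i) \<in> span (f ` (C - {m0}))"
    proof (cases "i = m0")
      case True then show ?thesis by (simp add: span_zero)
    next
      case False then show ?thesis using \<open>i \<in> C\<close> by (intro span_scale span_base) auto
    qed
  qed
  finally have u'S: "u' \<in> span (f ` (C - {m0}))" .
  show ?case
  proof (cases "u' = 0")
    case False
    have "card (C - {m0}) < card C" using m0 less.prems(1) by (meson card_Diff1_less)
    from less.hyps[OF this _ u'S False u'U] less.prems(1) show ?thesis by auto
  next
    case True
    then have "T u = sc (e m0) u" by (simp add: u'_def)
    from proj_lemma[OF less.prems(1,2) T _ this] eig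
    have "u \<in> span (f ` {i\<in>C. e i = e m0})" by auto
    moreover have "{i\<in>C. e i = e m0} = {m0}" using inj m0 by (auto simp: inj_on_def)
    ultimately have "u \<in> span {f m0}" by simp
    then obtain s where s: "u = sc s (f m0)" by (auto simp: span_singleton)
    with less.prems have "s \<noteq> 0" by auto
    have "sc (1 / s) u \<in> U" using less.prems(4) U(1) by (rule subspace_scale[rotated])
    then have "f m0 \<in> U" using s \<open>s \<noteq> 0\<close> by simp
    then show ?thesis using m0 by blast
  qed
qed

end

locale dn = weyl +
  fixes x and lam :: complex and \<tau> :: complex
  assumes n1: "n = 1" and x0: "x \<noteq> 0" and Hx: "H x = sc lam x" and Tx: "B 0 (A 0 x) = sc \<tau> x"
    and nonint: "\<And>k::int. \<tau> \<noteq> of_int k * gg 0"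
begin

abbreviation "a \<equiv> A 0"
abbreviation "b \<equiv> B 0"
abbreviation "\<gamma> \<equiv> gg 0"

lemma n0: "0 < n" using n1 by simp

lemma ab: "a (b y) = b (a y) + sc \<gamma> y" using AB[OF n0 n0] by simp

lemma a_add: "a (y + z) = a y + a z" and a_scale: "a (sc c y) = sc c (a y)" and a_zero: "a 0 = 0"
  using A_add[OF n0] A_scale[OF n0] A_zero[OF n0] by auto
lemma b_add: "b (y + z) = b y + b z" and b_scale: "b (sc c y) = sc c (b y)" and b_zero: "b 0 = 0"
  using B_add[OF n0] B_scale[OF n0] B_zero[OF n0] by auto

lemma g0: "\<gamma> \<noteq> 0" using gnz[OF n0] .

lemma ba_eq: "b (a z) = a (b z) - sc \<gamma> z"
  using ab[of z] by (simp add: eq_diff_eq)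

lemma Ta_pow: "b (a ((a ^^ k) x)) = sc (\<tau> - of_nat k * \<gamma>) ((a ^^ k) x)"
proof (induction k)
  case 0 then show ?case by (simp add: Tx)
next
  case (Suc k)
  define y where "y = (a ^^ k) x"
  have "b (a ((a ^^ Suc k) x)) = b (a (a y))" by (simp add: y_def)
  also have "\<dots> = a (b (a y)) - sc \<gamma> (a y)" by (rule ba_eq)
  also have "a (b (a y)) = sc (\<tau> - of_nat k * \<gamma>) (a y)"
    using Suc.IH by (simp add: a_scale y_def)
  also have "sc (\<tau> - of_nat k * \<gamma>) (a y) - sc \<gamma> (a y) = sc (\<tau> - of_nat k * \<gamma> - \<gamma>) (a y)"
    by (simp only: scale_left_diff_distrib)
  also have "\<tau> - of_nat k * \<gamma> - \<gamma> = \<tau> - of_nat (Suc k) * \<gamma>" by (simp add: algebra_simps)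
  finally show ?case by (simp add: y_def)
qed

lemma Tb_pow: "b (a ((b ^^ k) x)) = sc (\<tau> + of_nat k * \<gamma>) ((b ^^ k) x)"
proof (induction k)
  case 0 then show ?case by (simp add: Tx)
next
  case (Suc k)
  define y where "y = (b ^^ k) x"
  have "b (a ((b ^^ Suc k) x)) = b (a (b y))" by (simp add: y_def)
  also have "\<dots> = b (b (a y) + sc \<gamma> y)" by (simp only: ab)
  also have "\<dots> = b (b (a y)) + sc \<gamma> (b y)" by (simp only: b_add b_scale)
  also have "b (b (a y)) = sc (\<tau> + of_nat k * \<gamma>) (b y)"
    using Suc.IH by (simp add: b_scale y_def)
  also have "sc (\<tau> + of_nat k * \<gamma>) (b y) + sc \<gamma> (b y) = sc (\<tau> + of_nat k * \<gamma> + \<gamma>) (b y)"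
    by (simp only: scale_left_distrib)
  also have "\<tau> + of_nat k * \<gamma> + \<gamma> = \<tau> + of_nat (Suc k) * \<gamma>" by (simp add: algebra_simps)
  finally show ?case by (simp add: y_def)
qed

lemma ab_pow: "a ((b ^^ Suc k) x) = sc (\<tau> + of_nat (Suc k) * \<gamma>) ((b ^^ k) x)"
proof -
  have "a ((b ^^ Suc k) x) = b (a ((b ^^ k) x)) + sc \<gamma> ((b ^^ k) x)" using ab by simp
  also have "\<dots> = sc (\<tau> + of_nat k * \<gamma>) ((b ^^ k) x) + sc \<gamma> ((b ^^ k) x)" by (simp only: Tb_pow)
  also have "\<dots> = sc (\<tau> + of_nat k * \<gamma> + \<gamma>) ((b ^^ k) x)" by (simp only: scale_left_distrib)
  also have "\<tau> + of_nat k * \<gamma> + \<gamma> = \<tau> + of_nat (Suc k) * \<gamma>" by (simp add: algebra_simps)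
  finally show ?thesis .
qed

lemma coef1: "\<tau> - of_nat k * \<gamma> \<noteq> 0"
proof
  assume "\<tau> - of_nat k * \<gamma> = 0"
  then have "\<tau> = of_int (int k) * \<gamma>" by simp
  then show False using nonint by blast
qed
lemma coef2: "\<tau> + of_nat k * \<gamma> \<noteq> 0"
proof
  assume "\<tau> + of_nat k * \<gamma> = 0"
  then have "\<tau> = of_int (- int k) * \<gamma>" by (simp add: add_eq_0_iff)
  then show False using nonint by blast
qed

lemma apow_nz: "(a ^^ k) x \<noteq> 0"
proof (induction k)
  case 0 then show ?case using x0 by simp
next
  case (Suc k)
  show ?case
  proof
    assume "(a ^^ Suc k) x = 0"
    then have "b ((a ^^ Suc k) x) = 0" by (simp add: b_zero)
    then have "sc (\<tau> - of_nat k * \<gamma>) ((a ^^ k) x) = 0" using Ta_pow[of k] by simp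
    then show False using coef1[of k] Suc by simp
  qed
qed

lemma bpow_nz: "(b ^^ k) x \<noteq> 0"
proof (induction k)
  case 0 then show ?case using x0 by simp
next
  case (Suc k)
  show ?case
  proof
    assume "(b ^^ Suc k) x = 0"
    then have "a ((b ^^ Suc k) x) = 0" by (simp add: a_zero)
    then have "sc (\<tau> + of_nat (Suc k) * \<gamma>) ((b ^^ k) x) = 0" using ab_pow[of k] by simp
    then show False using coef2[of "Suc k"] Suc by (simp del: of_nat_Suc)
  qed
qed

definition f :: "int \<Rightarrow> _" where
  "f m = (if 0 \<le> m then (a ^^ nat m) x else (b ^^ nat (- m)) x)"

lemma f_nz: "f m \<noteq> 0" by (simp add: f_def apow_nz bpow_nz)

lemma Hpow_a: "H ((a ^^ k) x) = sc (lam + of_nat k * of_nat (w 0)) ((a ^^ k) x)"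
proof (induction k)
  case 0 then show ?case by (simp add: Hx)
next
  case (Suc k)
  have "H ((a ^^ Suc k) x) = a (H ((a ^^ k) x)) + sc (of_nat (w 0)) ((a ^^ Suc k) x)"
    by (simp add: HA[OF n0])
  also have "\<dots> = sc (lam + of_nat k * of_nat (w 0)) ((a ^^ Suc k) x) + sc (of_nat (w 0)) ((a ^^ Suc k) x)"
    by (simp add: Suc.IH a_scale)
  also have "\<dots> = sc (lam + of_nat k * of_nat (w 0) + of_nat (w 0)) ((a ^^ Suc k) x)"
    by (simp only: scale_left_distrib)
  also have "lam + of_nat k * of_nat (w 0) + of_nat (w 0) = lam + of_nat (Suc k) * of_nat (w 0)"
    by (simp add: algebra_simps)
  finally show ?case .
qed

lemma Hpow_b: "H ((b ^^ k) x) = sc (lam - of_nat k * of_nat (w 0)) ((b ^^ k) x)"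
proof (induction k)
  case 0 then show ?case by (simp add: Hx)
next
  case (Suc k)
  have "H ((b ^^ Suc k) x) = b (H ((b ^^ k) x)) - sc (of_nat (w 0)) ((b ^^ Suc k) x)"
    by (simp add: HB[OF n0])
  also have "\<dots> = sc (lam - of_nat k * of_nat (w 0)) ((b ^^ Suc k) x) - sc (of_nat (w 0)) ((b ^^ Suc k) x)"
    by (simp add: Suc.IH b_scale)
  also have "\<dots> = sc (lam - of_nat k * of_nat (w 0) - of_nat (w 0)) ((b ^^ Suc k) x)"
    by (simp only: scale_left_diff_distrib)
  also have "lam - of_nat k * of_nat (w 0) - of_nat (w 0) = lam - of_nat (Suc k) * of_nat (w 0)"
    by (simp add: algebra_simps)
  finally show ?case .
qed

lemma f_H: "H (f m) = sc (lam + of_int m * of_nat (w 0)) (f m)"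
  by (cases "0 \<le> m") (simp_all add: f_def Hpow_a Hpow_b)

lemma f_T: "b (a (f m)) = sc (\<tau> - of_int m * \<gamma>) (f m)"
  by (cases "0 \<le> m") (simp_all add: f_def Ta_pow Tb_pow)

lemma a_f: "a (f m) \<in> span {f (m + 1)}"
proof (cases "0 \<le> m")
  case True
  then have "a (f m) = f (m + 1)" by (simp add: f_def nat_add_distrib)
  then show ?thesis by (simp add: span_base)
next
  case False
  define k where "k = nat (- m) - 1"
  have nk: "nat (- m) = Suc k" using False by (simp add: k_def)
  have fm: "f m = (b ^^ Suc k) x" using False nk by (simp add: f_def)
  have fm1: "f (m + 1) = (b ^^ k) x"
  proof (cases "k = 0")
    case True
    then have "m + 1 = 0" using nk False by simp
    then show ?thesis using True by (simp add: f_def)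
  next
    case False
    then have "nat (- (m + 1)) = k" "\<not> 0 \<le> m + 1" using nk by auto
    then show ?thesis by (simp add: f_def)
  qed
  have "a (f m) = sc (\<tau> + of_nat (Suc k) * \<gamma>) ((b ^^ k) x)"
    using ab_pow[of k] fm by simp
  then show ?thesis using fm1 by (simp add: span_scale span_base)
qed

lemma b_f: "b (f m) \<in> span {f (m - 1)}"
proof (cases "m \<le> 0")
  case True
  have "nat (- (m - 1)) = Suc (nat (- m))" using True by simp
  then have "f (m - 1) = b ((b ^^ nat (- m)) x)" using True by (simp add: f_def)
  moreover have "f m = (b ^^ nat (- m)) x" using True by (simp add: f_def)
  ultimately have "b (f m) = f (m - 1)" by simp
  then show ?thesis by (simp add: span_base)
next
  case False
  define k where "k = nat m - 1"
  have nk: "nat m = Suc k" using False by (simp add: k_def)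
  have fm: "f m = (a ^^ Suc k) x" using False nk by (simp add: f_def)
  have fm1: "f (m - 1) = (a ^^ k) x"
  proof -
    have "nat (m - 1) = k" "0 \<le> m - 1" using nk False by auto
    then show ?thesis by (simp add: f_def)
  qed
  have "b (f m) = sc (\<tau> - of_nat k * \<gamma>) ((a ^^ k) x)"
    using Ta_pow[of k] fm by simp
  then show ?thesis using fm1 by (simp add: span_scale span_base)
qed


definition Wf where "Wf = span (range f)"

lemma i0: "i < n \<Longrightarrow> i = 0" using n1 by simp

lemma a_Wf: "a ` Wf \<subseteq> Wf"
proof -
  have "a ` range f \<subseteq> span (range f)"
    using a_f span_mono[of "{f (m + 1)}" "range f" for m] by blast
  then show ?thesis unfolding Wf_def using hom_span[OF linA[OF n0]] by blast
qed

lemma b_Wf: "b ` Wf \<subseteq> Wf"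
proof -
  have "b ` range f \<subseteq> span (range f)"
    using b_f span_mono[of "{f (m - 1)}" "range f" for m] by blast
  then show ?thesis unfolding Wf_def using hom_span[OF linB[OF n0]] by blast
qed

lemma H_Wf: "H ` Wf \<subseteq> Wf"
proof -
  have "H ` range f \<subseteq> span (range f)"
  proof
    fix y assume "y \<in> H ` range f"
    then obtain m where "y = H (f m)" by auto
    then show "y \<in> span (range f)" using f_H[of m] by (simp add: span_scale span_base)
  qed
  then show ?thesis unfolding Wf_def using hom_span[OF linH] by blast
qed

lemma T_hom: "module_hom sc sc (\<lambda>y. b (a y))"
  by unfold_locales (simp_all add: a_add a_scale b_add b_scale)

lemma fin_weight: "\<exists>F. finite F \<and> Wf \<inter> {y. H y = sc \<nu> y} \<subseteq> span F"
proof -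
  define S where "S = {m. lam + of_int m * of_nat (w 0) = \<nu>}"
  have w0: "(of_nat (w 0) :: complex) \<noteq> 0" using wpos[OF n0] by simp
  have finS: "finite S"
  proof (cases "S = {}")
    case False
    then obtain m0 where m0: "m0 \<in> S" by auto
    have "S \<subseteq> {m0}"
    proof
      fix m assume "m \<in> S"
      then have "lam + of_int m * of_nat (w 0) = lam + (of_int m0 * of_nat (w 0) :: complex)"
        using m0 by (simp add: S_def)
      then have "of_int m * of_nat (w 0) = (of_int m0 * of_nat (w 0) :: complex)"
        by (rule add_left_imp_eq)
      then have "(of_int m :: complex) = of_int m0" using w0 by simp
      then show "m \<in> {m0}" by simp
    qed
    then show ?thesis using finite_subset by blast
  qed simp
  have "Wf \<inter> {y. H y = sc \<nu> y} \<subseteq> span (f ` S)"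
  proof
    fix y assume y: "y \<in> Wf \<inter> {y. H y = sc \<nu> y}"
    from span_image_finite_sub[of y f UNIV] y obtain C where
      C: "finite C" "y \<in> span (f ` C)" by (auto simp: Wf_def)
    have "y \<in> span (f ` {m\<in>C. lam + of_int m * of_nat (w 0) = \<nu>})"
      by (rule proj_lemma[OF C linH]) (use f_H y in auto)
    moreover have "{m\<in>C. lam + of_int m * of_nat (w 0) = \<nu>} \<subseteq> S" by (auto simp: S_def)
    ultimately show "y \<in> span (f ` S)" using span_mono[OF image_mono] by blast
  qed
  then show ?thesis using finS by blast
qed

lemma down_a: "(a ^^ k) x \<in> U \<Longrightarrow> subspace U \<Longrightarrow> b ` U \<subseteq> U \<Longrightarrow> x \<in> U"
proof (induction k)
  case 0 then show ?case by simp
next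
  case (Suc k)
  then have "b ((a ^^ Suc k) x) \<in> U" by auto
  then have "sc (\<tau> - of_nat k * \<gamma>) ((a ^^ k) x) \<in> U" using Ta_pow[of k] by simp
  then have "sc (1 / (\<tau> - of_nat k * \<gamma>)) (sc (\<tau> - of_nat k * \<gamma>) ((a ^^ k) x)) \<in> U"
    using Suc.prems(2) by (rule subspace_scale[rotated])
  then have "(a ^^ k) x \<in> U" using coef1[of k] by simp
  then show ?case using Suc by blast
qed

lemma down_b: "(b ^^ k) x \<in> U \<Longrightarrow> subspace U \<Longrightarrow> a ` U \<subseteq> U \<Longrightarrow> x \<in> U"
proof (induction k)
  case 0 then show ?case by simp
next
  case (Suc k)
  then have "a ((b ^^ Suc k) x) \<in> U" by auto
  then have "sc (\<tau> + of_nat (Suc k) * \<gamma>) ((b ^^ k) x) \<in> U" using ab_pow[of k] by simp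
  then have "sc (1 / (\<tau> + of_nat (Suc k) * \<gamma>)) (sc (\<tau> + of_nat (Suc k) * \<gamma>) ((b ^^ k) x)) \<in> U"
    using Suc.prems(2) by (rule subspace_scale[rotated])
  then have "(b ^^ k) x \<in> U" using coef2[of "Suc k"] by (simp del: of_nat_Suc)
  then show ?case using Suc by blast
qed

lemma Wf_simple:
  assumes U: "U \<subseteq> Wf" "subspace U" "\<forall>i<n. A i ` U \<subseteq> U \<and> B i ` U \<subseteq> U" "U \<noteq> {0}"
  shows "U = Wf"
proof -
  have aU: "a ` U \<subseteq> U" and bU: "b ` U \<subseteq> U" using U(3) n0 by auto
  from U(2,4) obtain u where u: "u \<in> U" "u \<noteq> 0" by (auto simp: subspace_0)
  from span_image_finite_sub[of u f UNIV] u U(1) obtain C where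
    C: "finite C" "u \<in> span (f ` C)" by (auto simp: Wf_def)
  have TU: "(\<lambda>y. b (a y)) ` U \<subseteq> U" using aU bU by auto
  have inj: "inj (\<lambda>m. \<tau> - of_int m * \<gamma>)" using g0 by (auto simp: inj_def)
  obtain m where m: "f m \<in> U"
    using extract_lemma[OF C(1) C(2) u(2) u(1) U(2) TU T_hom f_T inj] by blast
  have xU: "x \<in> U"
  proof (cases "0 \<le> m")
    case True then show ?thesis using m down_a[of "nat m" U] U(2) bU by (simp add: f_def)
  next
    case False then show ?thesis using m down_b[of "nat (- m)" U] U(2) aU by (simp add: f_def)
  qed
  have "(a ^^ k) x \<in> U" for k by (induction k) (use xU aU in auto)
  moreover have "(b ^^ k) x \<in> U" for k by (induction k) (use xU bU in auto)
  ultimately have "range f \<subseteq> U" by (auto simp: f_def)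
  then have "Wf \<subseteq> U" unfolding Wf_def using span_minimal U(2) by blast
  then show ?thesis using U(1) by blast
qed

theorem dn_good: "good sc n H A B Wf"
proof -
  have "subspace Wf" by (simp add: Wf_def)
  moreover have "\<forall>i<n. A i ` Wf \<subseteq> Wf \<and> B i ` Wf \<subseteq> Wf" using a_Wf b_Wf i0 by blast
  moreover have "Wf \<noteq> {0}"
  proof -
    have "f 0 \<in> Wf" by (simp add: Wf_def span_base)
    then show ?thesis using f_nz[of 0] by auto
  qed
  moreover have "\<forall>\<nu>. \<exists>F. finite F \<and> Wf \<inter> {x. H x = sc \<nu> x} \<subseteq> span F" using fin_weight by blast
  moreover have "\<forall>U. U \<subseteq> Wf \<and> subspace U \<and> (\<forall>i<n. A i ` U \<subseteq> U \<and> B i ` U \<subseteq> U) \<longrightarrow> U = {0} \<or> U = Wf"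
    using Wf_simple by blast
  ultimately show ?thesis unfolding good_def using H_Wf by blast
qed

end

lemma comm_pow: "(\<And>z. F (G z) = G (F z)) \<Longrightarrow> F ((G ^^ p) y) = (G ^^ p) (F y)"
  by (induction p) auto

lemma lastnz: "y \<noteq> 0 \<Longrightarrow> (F ^^ k) y = 0 \<Longrightarrow> \<exists>p. (F ^^ p) y \<noteq> 0 \<and> F ((F ^^ p) y) = 0"
proof (induction k)
  case 0 then show ?case by simp
next
  case (Suc k)
  show ?case
  proof (cases "(F ^^ k) y = 0")
    case True then show ?thesis using Suc by blast
  next
    case False then show ?thesis using Suc.prems by (intro exI[of _ k]) auto
  qed
qed

context weyl
begin

definition NA where "NA i = {y. \<exists>k. (A i ^^ k) y = 0}"

lemma Apow_zero: "i < n \<Longrightarrow> (A i ^^ k) 0 = 0"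
  by (induction k) (auto simp: A_zero)
lemma Apow_scale: "i < n \<Longrightarrow> (A i ^^ k) (sc c y) = sc c ((A i ^^ k) y)"
  by (induction k) (auto simp: A_scale)
lemma Bpow_zero: "i < n \<Longrightarrow> (B i ^^ k) 0 = 0"
  by (induction k) (auto simp: B_zero)
lemma Bpow_scale: "i < n \<Longrightarrow> (B i ^^ k) (sc c y) = sc c ((B i ^^ k) y)"
  by (induction k) (auto simp: B_scale)

lemma AB_pow:
  assumes i: "i < n"
  shows "(A i ^^ Suc p) (B i y) = B i ((A i ^^ Suc p) y) + sc (of_nat (Suc p) * gg i) ((A i ^^ p) y)"
proof (induction p)
  case 0 then show ?case using AB[OF i i] by simp
next
  case (Suc p)
  have "(A i ^^ Suc (Suc p)) (B i y) = A i ((A i ^^ Suc p) (B i y))" by simp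
  also have "\<dots> = A i (B i ((A i ^^ Suc p) y)) + sc (of_nat (Suc p) * gg i) ((A i ^^ Suc p) y)"
    by (simp only: Suc A_add[OF i] A_scale[OF i]) simp
  also have "A i (B i ((A i ^^ Suc p) y)) = B i ((A i ^^ Suc (Suc p)) y) + sc (gg i) ((A i ^^ Suc p) y)"
    using AB[OF i i] by simp
  also have "B i ((A i ^^ Suc (Suc p)) y) + sc (gg i) ((A i ^^ Suc p) y) + sc (of_nat (Suc p) * gg i) ((A i ^^ Suc p) y)
     = B i ((A i ^^ Suc (Suc p)) y) + sc (gg i + of_nat (Suc p) * gg i) ((A i ^^ Suc p) y)"
    by (simp only: add.assoc scale_left_distrib)
  also have "gg i + of_nat (Suc p) * gg i = of_nat (Suc (Suc p)) * gg i" by (simp add: algebra_simps)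
  finally show ?case .
qed

lemma NA_A: "i < n \<Longrightarrow> k < n \<Longrightarrow> y \<in> NA i \<Longrightarrow> A k y \<in> NA i"
proof -
  assume i: "i < n" and k: "k < n" and "y \<in> NA i"
  then obtain m where m: "(A i ^^ m) y = 0" by (auto simp: NA_def)
  have "(A i ^^ m) (A k y) = A k ((A i ^^ m) y)"
    by (rule comm_pow[symmetric]) (simp add: AA[OF k i])
  then show "A k y \<in> NA i" using m A_zero[OF k] by (auto simp: NA_def)
qed

lemma NA_B: "i < n \<Longrightarrow> k < n \<Longrightarrow> y \<in> NA i \<Longrightarrow> B k y \<in> NA i"
proof -
  assume i: "i < n" and k: "k < n" and "y \<in> NA i"
  then obtain m where m: "(A i ^^ m) y = 0" by (auto simp: NA_def)
  show "B k y \<in> NA i"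
  proof (cases "k = i")
    case True
    have "(A i ^^ Suc m) (B i y) = 0"
      using AB_pow[OF i, of m y] m by (simp add: B_zero[OF i] Apow_zero[OF i] A_zero[OF i] funpow_swap1)
    then have "B i y \<in> {z. \<exists>k. (A i ^^ k) z = 0}" by blast
    then show ?thesis using True by (simp add: NA_def)
  next
    case False
    have "(A i ^^ m) (B k y) = B k ((A i ^^ m) y)"
      by (rule comm_pow[symmetric]) (use AB[OF i k] False in simp)
    then show ?thesis using m B_zero[OF k] by (auto simp: NA_def)
  qed
qed

lemma NA_Apow: "i < n \<Longrightarrow> k < n \<Longrightarrow> y \<in> NA i \<Longrightarrow> (A k ^^ p) y \<in> NA i"
  by (induction p) (auto intro: NA_A)
lemma NA_Bpow: "i < n \<Longrightarrow> k < n \<Longrightarrow> y \<in> NA i \<Longrightarrow> (B k ^^ p) y \<in> NA i"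
  by (induction p) (auto intro: NA_B)

lemma NA_scale_iff: "i < n \<Longrightarrow> c \<noteq> 0 \<Longrightarrow> sc c y \<in> NA i \<longleftrightarrow> y \<in> NA i"
  by (auto simp: NA_def Apow_scale)

lemma Hpow_A: "i < n \<Longrightarrow> H y = sc c y \<Longrightarrow> H ((A i ^^ p) y) = sc (c + of_nat p * of_nat (w i)) ((A i ^^ p) y)"
proof (induction p)
  case 0 then show ?case by simp
next
  case (Suc p)
  have "H ((A i ^^ Suc p) y) = A i (H ((A i ^^ p) y)) + sc (of_nat (w i)) ((A i ^^ Suc p) y)"
    by (simp add: HA[OF Suc.prems(1)])
  also have "\<dots> = sc (c + of_nat p * of_nat (w i)) ((A i ^^ Suc p) y) + sc (of_nat (w i)) ((A i ^^ Suc p) y)"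
    using Suc by (simp add: A_scale)
  also have "\<dots> = sc (c + of_nat p * of_nat (w i) + of_nat (w i)) ((A i ^^ Suc p) y)"
    by (simp only: scale_left_distrib)
  also have "c + of_nat p * of_nat (w i) + of_nat (w i) = c + of_nat (Suc p) * of_nat (w i)"
    by (simp add: algebra_simps)
  finally show ?case .
qed

lemma Hpow_B: "i < n \<Longrightarrow> H y = sc c y \<Longrightarrow> H ((B i ^^ p) y) = sc (c - of_nat p * of_nat (w i)) ((B i ^^ p) y)"
proof (induction p)
  case 0 then show ?case by simp
next
  case (Suc p)
  have "H ((B i ^^ Suc p) y) = B i (H ((B i ^^ p) y)) - sc (of_nat (w i)) ((B i ^^ Suc p) y)"
    by (simp add: HB[OF Suc.prems(1)])
  also have "\<dots> = sc (c - of_nat p * of_nat (w i)) ((B i ^^ Suc p) y) - sc (of_nat (w i)) ((B i ^^ Suc p) y)"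
    using Suc by (simp add: B_scale)
  also have "\<dots> = sc (c - of_nat p * of_nat (w i) - of_nat (w i)) ((B i ^^ Suc p) y)"
    by (simp only: scale_left_diff_distrib)
  also have "c - of_nat p * of_nat (w i) - of_nat (w i) = c - of_nat (Suc p) * of_nat (w i)"
    by (simp add: algebra_simps)
  finally show ?case .
qed

lemma T_Apow:
  assumes i: "i < n" and Ty: "B i (A i y) = sc \<tau> y"
  shows "B i (A i ((A i ^^ p) y)) = sc (\<tau> - of_nat p * gg i) ((A i ^^ p) y)"
proof (induction p)
  case 0 then show ?case by (simp add: Ty)
next
  case (Suc p)
  define z where "z = (A i ^^ p) y"
  have "B i (A i ((A i ^^ Suc p) y)) = B i (A i (A i z))" by (simp add: z_def)
  also have "\<dots> = A i (B i (A i z)) - sc (gg i) (A i z)"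
    using AB[OF i i, of "A i z"] by (simp add: eq_diff_eq)
  also have "A i (B i (A i z)) = sc (\<tau> - of_nat p * gg i) (A i z)"
    using Suc.IH by (simp add: A_scale[OF i] z_def)
  also have "sc (\<tau> - of_nat p * gg i) (A i z) - sc (gg i) (A i z) = sc (\<tau> - of_nat p * gg i - gg i) (A i z)"
    by (simp only: scale_left_diff_distrib)
  also have "\<tau> - of_nat p * gg i - gg i = \<tau> - of_nat (Suc p) * gg i" by (simp add: algebra_simps)
  finally show ?case by (simp add: z_def)
qed

lemma T_Bpow_comm:
  assumes i: "i < n" and j: "j < n" and ij: "i \<noteq> j" and Ty: "B i (A i y) = sc \<tau> y"
  shows "B i (A i ((B j ^^ p) y)) = sc \<tau> ((B j ^^ p) y)"
proof -
  have c1: "A i ((B j ^^ p) y) = (B j ^^ p) (A i y)"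
    by (rule comm_pow) (use AB[OF i j] ij in simp)
  have c2: "B i ((B j ^^ p) z) = (B j ^^ p) (B i z)" for z
    by (rule comm_pow) (use BB[OF i j] in simp)
  show ?thesis using c1 c2 Ty by (simp add: Bpow_scale[OF j])
qed

lemma NA_NB_disj:
  assumes i: "i < n" and yA: "y \<in> NA i" and yB: "\<exists>k. (B i ^^ k) y = 0"
  shows "y = 0"
proof (rule ccontr)
  assume y0: "y \<noteq> 0"
  from yA obtain k where "(A i ^^ k) y = 0" by (auto simp: NA_def)
  from lastnz[OF y0 this] obtain p where p: "(A i ^^ p) y \<noteq> 0" "A i ((A i ^^ p) y) = 0" by blast
  define y' where "y' = (A i ^^ p) y"
  have "\<exists>k. (B i ^^ k) y' = 0"
  proof -
    interpret sw: weyl sc n "\<lambda>x. - H x" B A "\<lambda>i. - gg i" w by (rule swap)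
    have "y \<in> sw.NA i" using yB by (simp add: sw.NA_def)
    then have "(A i ^^ p) y \<in> sw.NA i" using sw.NA_Bpow[OF i i] by blast
    then show ?thesis by (simp add: sw.NA_def y'_def)
  qed
  then obtain q where q: "(B i ^^ q) y' = 0" by blast
  have y'0: "y' \<noteq> 0" and Ay': "A i y' = 0" using p by (auto simp: y'_def)
  from lastnz[OF y'0 q] obtain r where r: "(B i ^^ r) y' \<noteq> 0" "B i ((B i ^^ r) y') = 0" by blast
  have key: "(B i ^^ Suc r) (A i y') = A i ((B i ^^ Suc r) y') - sc (of_nat (Suc r) * gg i) ((B i ^^ r) y')"
  proof (induction r)
    case 0 then show ?case using AB[OF i i, of y'] by (simp add: eq_diff_eq)
  next
    case (Suc m)
    have "(B i ^^ Suc (Suc m)) (A i y') = B i (A i ((B i ^^ Suc m) y')) - sc (of_nat (Suc m) * gg i) ((B i ^^ Suc m) y')"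
      using Suc by (simp add: B_diff[OF i] B_scale[OF i])
    also have "B i (A i ((B i ^^ Suc m) y')) = A i ((B i ^^ Suc (Suc m)) y') - sc (gg i) ((B i ^^ Suc m) y')"
      using AB[OF i i, of "(B i ^^ Suc m) y'"] by (simp add: eq_diff_eq)
    also have "A i ((B i ^^ Suc (Suc m)) y') - sc (gg i) ((B i ^^ Suc m) y') - sc (of_nat (Suc m) * gg i) ((B i ^^ Suc m) y')
       = A i ((B i ^^ Suc (Suc m)) y') - sc (gg i + of_nat (Suc m) * gg i) ((B i ^^ Suc m) y')"
      by (simp only: diff_diff_eq scale_left_distrib)
    also have "gg i + of_nat (Suc m) * gg i = of_nat (Suc (Suc m)) * gg i" by (simp add: algebra_simps)
    finally show ?case .
  qed
  have "(B i ^^ Suc r) y' = 0" using r(2) by simp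
  then have "sc (of_nat (Suc r) * gg i) ((B i ^^ r) y') = 0"
    using key Ay' by (simp add: Bpow_zero[OF i] A_zero[OF i] B_zero[OF i])
  then show False using r(1) gnz[OF i] by (simp del: of_nat_Suc)
qed


lemma extreme:
  assumes y0: "y \<noteq> 0" and Hy: "H y = sc c y" and yA: "\<forall>i<n. y \<in> NA i"
  shows "\<exists>v \<mu>. v \<noteq> 0 \<and> H v = sc \<mu> v \<and> (\<forall>i<n. A i v = 0)"
proof -
  have "m \<le> n \<Longrightarrow> \<exists>v \<mu>. v \<noteq> 0 \<and> H v = sc \<mu> v \<and> (\<forall>i<n. v \<in> NA i) \<and> (\<forall>i<m. A i v = 0)" for m
  proof (induction m)
    case 0 then show ?case using assms by blast
  next
    case (Suc m)
    then obtain v \<mu> where v: "v \<noteq> 0" "H v = sc \<mu> v" "\<forall>i<n. v \<in> NA i" "\<forall>i<m. A i v = 0" by auto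
    have m: "m < n" using Suc by simp
    from v(3) m obtain k where "(A m ^^ k) v = 0" by (auto simp: NA_def)
    from lastnz[OF v(1) this] obtain p where p: "(A m ^^ p) v \<noteq> 0" "A m ((A m ^^ p) v) = 0" by blast
    define v' where "v' = (A m ^^ p) v"
    have "H v' = sc (\<mu> + of_nat p * of_nat (w m)) v'" unfolding v'_def by (rule Hpow_A[OF m v(2)])
    moreover have "\<forall>i<n. v' \<in> NA i" using v(3) NA_Apow m by (auto simp: v'_def)
    moreover have "\<forall>i<Suc m. A i v' = 0"
    proof (intro allI impI)
      fix i assume "i < Suc m"
      then have i: "i < n" "i \<le> m" using m by auto
      show "A i v' = 0"
      proof (cases "i = m")
        case True then show ?thesis using p by (simp add: v'_def)
      next
        case False
        then have "A i v = 0" using v(4) i by simp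
        moreover have "A i v' = (A m ^^ p) (A i v)" unfolding v'_def
          by (rule comm_pow) (simp add: AA[OF i(1) m])
        ultimately show ?thesis by (simp add: Apow_zero[OF m])
      qed
    qed
    ultimately show ?case using p(1) by (auto simp: v'_def)
  qed
  from this[of n] show ?thesis by auto
qed

lemma T_hom: "i < n \<Longrightarrow> module_hom sc sc (\<lambda>y. B i (A i y))"
  by unfold_locales (simp_all add: A_add A_scale B_add B_scale)

lemma star:
  assumes i: "i < n" and j: "j < n" and ij: "i \<noteq> j" and Bs: "finite Bs"
    and S: "{y. H y = sc lam y} \<subseteq> span Bs" and Hx: "H x = sc lam x" and Tx: "B i (A i x) = sc \<tau> x"
  shows "\<exists>M0. \<forall>M\<ge>M0. (B j ^^ M) x \<in> NA i"
proof -
  define fm where "fm m = (A i ^^ (m * w j)) ((B j ^^ (m * w i)) x)" for m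
  define e where "e m = \<tau> - of_nat (m * w j) * gg i" for m
  have Hf: "H (fm m) = sc lam (fm m)" for m
  proof -
    have "H (fm m) = sc (lam - of_nat (m * w i) * of_nat (w j) + of_nat (m * w j) * of_nat (w i)) (fm m)"
      unfolding fm_def by (rule Hpow_A[OF i Hpow_B[OF j Hx]])
    also have "lam - of_nat (m * w i) * of_nat (w j) + of_nat (m * w j) * of_nat (w i) = lam"
      by (simp add: algebra_simps)
    finally show ?thesis .
  qed
  have Tf: "B i (A i (fm m)) = sc (e m) (fm m)" for m
    unfolding fm_def e_def by (rule T_Apow[OF i T_Bpow_comm[OF i j ij Tx]])
  have inj: "inj e"
  proof (rule injI)
    fix m1 m2 assume "e m1 = e m2"
    then have "of_nat (m1 * w j) * gg i = of_nat (m2 * w j) * gg i" by (simp add: e_def)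
    then have "(of_nat (m1 * w j) :: complex) = of_nat (m2 * w j)" using gnz[OF i] by simp
    then have "m1 * w j = m2 * w j" by (simp only: of_nat_eq_iff)
    then show "m1 = m2" using wpos[OF j] by simp
  qed
  have "\<exists>m. fm m = 0"
  proof (rule ccontr)
    assume "\<nexists>m. fm m = 0"
    then have nz: "\<And>m. fm m \<noteq> 0" by blast
    have "\<And>m. fm m \<in> span Bs" using S Hf by blast
    from no_inf_eigen_family[OF Bs this T_hom[OF i] nz Tf inj] show False .
  qed
  then obtain m where "fm m = 0" by blast
  then have mem: "(B j ^^ (m * w i)) x \<in> NA i" unfolding NA_def fm_def by blast
  show ?thesis
  proof (intro exI allI impI)
    fix M assume "m * w i \<le> M"
    then have "(B j ^^ M) x = (B j ^^ (M - m * w i)) ((B j ^^ (m * w i)) x)"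
      by (simp add: funpow_add[symmetric, THEN fun_cong, simplified])
    then show "(B j ^^ M) x \<in> NA i" using NA_Bpow[OF i j mem] by simp
  qed
qed

end

lemma combine_bounds:
  fixes N :: nat
  shows "(\<And>i. i < N \<Longrightarrow> P i \<Longrightarrow> \<exists>M0::nat. \<forall>M\<ge>M0. Q i M) \<Longrightarrow> \<exists>M0. \<forall>M\<ge>M0. \<forall>i<N. P i \<longrightarrow> Q i M"
proof (induction N)
  case 0 then show ?case by simp
next
  case (Suc N)
  then obtain M1 where M1: "\<forall>M\<ge>M1. \<forall>i<N. P i \<longrightarrow> Q i M" by auto
  show ?case
  proof (cases "P N")
    case True
    then obtain M2 where M2: "\<forall>M\<ge>M2. Q N M" using Suc.prems by blast
    show ?thesis using M1 M2 by (intro exI[of _ "max M1 M2"]) (auto simp: less_Suc_eq)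
  next
    case False
    then show ?thesis using M1 by (intro exI[of _ M1]) (auto simp: less_Suc_eq)
  qed
qed


context weyl
begin

lemma T_Bpow:
  assumes i: "i < n" and Tx: "B i (A i x) = sc \<tau> x"
  shows "B i (A i ((B i ^^ p) x)) = sc (\<tau> + of_nat p * gg i) ((B i ^^ p) x)"
proof (induction p)
  case 0 then show ?case by (simp add: Tx)
next
  case (Suc p)
  define z where "z = (B i ^^ p) x"
  have "B i (A i ((B i ^^ Suc p) x)) = B i (A i (B i z))" by (simp add: z_def)
  also have "\<dots> = B i (B i (A i z) + sc (gg i) z)" using AB[OF i i] by simp
  also have "\<dots> = B i (B i (A i z)) + sc (gg i) (B i z)" by (simp only: B_add[OF i] B_scale[OF i])
  also have "B i (B i (A i z)) = sc (\<tau> + of_nat p * gg i) (B i z)"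
    using Suc.IH by (simp add: B_scale[OF i] z_def)
  also have "sc (\<tau> + of_nat p * gg i) (B i z) + sc (gg i) (B i z) = sc (\<tau> + of_nat p * gg i + gg i) (B i z)"
    by (simp only: scale_left_distrib)
  also have "\<tau> + of_nat p * gg i + gg i = \<tau> + of_nat (Suc p) * gg i" by (simp add: algebra_simps)
  finally show ?case by (simp add: z_def)
qed

lemma A_Bpow:
  assumes i: "i < n" and Tx: "B i (A i x) = sc \<tau> x"
  shows "A i ((B i ^^ Suc p) x) = sc (\<tau> + of_nat (Suc p) * gg i) ((B i ^^ p) x)"
proof -
  have "A i ((B i ^^ Suc p) x) = B i (A i ((B i ^^ p) x)) + sc (gg i) ((B i ^^ p) x)" using AB[OF i i] by simp
  also have "\<dots> = sc (\<tau> + of_nat p * gg i) ((B i ^^ p) x) + sc (gg i) ((B i ^^ p) x)"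
    by (simp only: T_Bpow[OF i Tx])
  also have "\<dots> = sc (\<tau> + of_nat p * gg i + gg i) ((B i ^^ p) x)" by (simp only: scale_left_distrib)
  also have "\<tau> + of_nat p * gg i + gg i = \<tau> + of_nat (Suc p) * gg i" by (simp add: algebra_simps)
  finally show ?thesis .
qed

lemma pow_Suc_right: "(f ^^ Suc p) y = (f ^^ p) (f y)"
  by (induction p) simp_all

lemma prodpow:
  assumes i: "i < n" and Tx: "B i (A i x) = sc \<tau> x" and nonint: "\<And>k::int. \<tau> \<noteq> of_int k * gg i"
  shows "\<exists>c. c \<noteq> 0 \<and> (A i ^^ p) ((B i ^^ p) x) = sc c x"
proof (induction p)
  case 0 then show ?case by (intro exI[of _ 1]) simp
next
  case (Suc p)
  then obtain c where c: "c \<noteq> 0" "(A i ^^ p) ((B i ^^ p) x) = sc c x" by blast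
  define d where "d = \<tau> + of_nat (Suc p) * gg i"
  have d0: "d \<noteq> 0"
  proof
    assume "d = 0"
    then have "\<tau> = - (of_nat (Suc p) * gg i)" unfolding d_def by (simp add: eq_neg_iff_add_eq_0)
    then have "\<tau> = of_int (- int (Suc p)) * gg i" by (simp add: algebra_simps)
    then show False using nonint by blast
  qed
  have "(A i ^^ Suc p) ((B i ^^ Suc p) x) = (A i ^^ p) (A i ((B i ^^ Suc p) x))"
    by (rule pow_Suc_right)
  also have "\<dots> = (A i ^^ p) (sc d ((B i ^^ p) x))" by (simp only: A_Bpow[OF i Tx] d_def)
  also have "\<dots> = sc (d * c) x" by (simp add: Apow_scale[OF i] c(2))
  finally show ?case using c(1) d0 by (intro exI[of _ "d * c"]) simp
qed

lemma half:
  assumes n0: "0 < n" and x0: "x \<noteq> 0" and Hx: "H x = sc lam x"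
    and M0: "\<forall>M\<ge>M0. \<forall>i<n. i \<noteq> 0 \<longrightarrow> (B 0 ^^ M) x \<in> NA i \<and> (\<exists>k. (B i ^^ k) ((A 0 ^^ M) x) = 0)"
    and cas: "x \<in> NA 0 \<or> (\<exists>k::nat. B 0 (A 0 x) = sc (of_nat k * gg 0) x)"
  shows "(\<exists>y c. y \<noteq> 0 \<and> H y = sc c y \<and> (\<forall>i<n. y \<in> NA i))
    \<or> (\<exists>y c. y \<noteq> 0 \<and> H y = sc c y \<and> (\<forall>i<n. \<exists>k. (B i ^^ k) y = 0))"
proof -
  interpret sw: weyl sc n "\<lambda>x. - H x" B A "\<lambda>i. - gg i" w by (rule swap)
  show ?thesis
  proof (cases "x \<in> NA 0")
    case True
    define y where "y = (B 0 ^^ M0) x"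
    have "y \<in> NA 0" unfolding y_def by (rule NA_Bpow[OF n0 n0 True])
    moreover have "y \<in> NA i" if "i < n" "i \<noteq> 0" for i
      using M0[rule_format, OF order_refl that] unfolding y_def by (rule conjunct1)
    ultimately have yA: "\<forall>i<n. y \<in> NA i" by metis
    have "y \<noteq> 0"
    proof
      assume "y = 0"
      then have "\<exists>k. (B 0 ^^ k) x = 0" unfolding y_def by blast
      from NA_NB_disj[OF n0 True this] x0 show False by simp
    qed
    moreover have "H y = sc (lam - of_nat M0 * of_nat (w 0)) y" unfolding y_def by (rule Hpow_B[OF n0 Hx])
    ultimately show ?thesis using yA by blast
  next
    case False
    with cas obtain k :: nat where Tk: "B 0 (A 0 x) = sc (of_nat k * gg 0) x" by blast
    define u where "u = (A 0 ^^ Suc k) x"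
    have "B 0 u = sc (of_nat k * gg 0 - of_nat k * gg 0) ((A 0 ^^ k) x)"
      unfolding u_def using T_Apow[OF n0 Tk, of k] by simp
    then have Bu: "B 0 u = 0" by simp
    have u0: "u \<noteq> 0"
    proof
      assume "u = 0"
      then have "x \<in> NA 0" unfolding u_def NA_def by blast
      with False show False by blast
    qed
    define z where "z = (A 0 ^^ M0) u"
    have zeq: "z = (A 0 ^^ (M0 + Suc k)) x" by (simp only: z_def u_def funpow_add o_apply)
    have uB: "u \<in> sw.NA 0" using Bu unfolding sw.NA_def by (intro CollectI exI[of _ 1]) simp
    have zB0: "z \<in> sw.NA 0" unfolding z_def by (rule sw.NA_Bpow[OF n0 n0 uB])
    have zBi: "\<exists>k. (B i ^^ k) z = 0" if "i < n" "i \<noteq> 0" for i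
      using M0[rule_format, of "M0 + Suc k", OF le_add1 that] unfolding zeq by (rule conjunct2)
    have zB: "\<forall>i<n. \<exists>k. (B i ^^ k) z = 0"
    proof (intro allI impI)
      fix i assume i: "i < n"
      show "\<exists>k. (B i ^^ k) z = 0"
      proof (cases "i = 0")
        case True then show ?thesis using zB0 by (simp add: sw.NA_def)
      next
        case False then show ?thesis using zBi i by blast
      qed
    qed
    have "z \<noteq> 0"
    proof
      assume "z = 0"
      then have "u \<in> NA 0" unfolding z_def NA_def by blast
      moreover have "\<exists>k. (B 0 ^^ k) u = 0" using uB by (simp add: sw.NA_def)
      ultimately show False using NA_NB_disj[OF n0] u0 by blast
    qed
    moreover have "H z = sc (lam + of_nat (M0 + Suc k) * of_nat (w 0)) z"
      unfolding zeq by (rule Hpow_A[OF n0 Hx])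
    ultimately show ?thesis using zB by blast
  qed
qed

end

context weyl
begin

lemma OA_good:
  assumes "y \<noteq> 0" "H y = sc c y" "\<forall>i<n. y \<in> NA i"
  shows "\<exists>W. good sc n H A B W"
proof -
  from extreme[OF assms] obtain v \<mu> where v: "v \<noteq> 0" "H v = sc \<mu> v" "\<forall>i<n. A i v = 0" by blast
  interpret h: hw sc n H A B gg w v \<mu> by unfold_locales (use v in auto)
  show ?thesis using h.hw_good by blast
qed

lemma OB_good:
  assumes "y \<noteq> 0" "H y = sc c y" "\<forall>i<n. \<exists>k. (B i ^^ k) y = 0"
  shows "\<exists>W. good sc n H A B W"
proof -
  interpret sw: weyl sc n "\<lambda>x. - H x" B A "\<lambda>i. - gg i" w by (rule swap)
  have "- H y = sc (- c) y" using assms(2) by simp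
  moreover have "\<forall>i<n. y \<in> sw.NA i" using assms(3) by (simp add: sw.NA_def)
  ultimately obtain v \<mu> where v: "v \<noteq> 0" "- H v = sc \<mu> v" "\<forall>i<n. B i v = 0"
    using sw.extreme[OF assms(1)] by blast
  interpret h: hw sc n "\<lambda>x. - H x" B A "\<lambda>i. - gg i" w v \<mu> by unfold_locales (use v in auto)
  show ?thesis using h.hw_good good_swap by blast
qed

theorem weyl_main:
  assumes n0: "0 < n" and ne: "{y. H y = sc lam y} \<noteq> {0}" and Bs: "finite Bs"
    and S: "{y. H y = sc lam y} \<subseteq> span Bs"
  shows "\<exists>W. good sc n H A B W"
proof -
  interpret sw: weyl sc n "\<lambda>x. - H x" B A "\<lambda>i. - gg i" w by (rule swap)
  define S where "S = {y. H y = sc lam y}"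
  have subS: "subspace S" unfolding S_def subspace_def
    by (auto simp: H_add H_scale H_zero scale_right_distrib)
  have HT: "H (B i (A i y)) = B i (A i (H y))" if i: "i < n" for i y
    by (simp add: HA[OF i] HB[OF i] B_add[OF i] B_scale[OF i])
  have Tpres: "(\<lambda>y. B i (A i y)) ` S \<subseteq> S" if i: "i < n" for i
    using HT[OF i] by (auto simp: S_def A_scale[OF i] B_scale[OF i])
  have Tcomm: "B i (A i (B k (A k y))) = B k (A k (B i (A i y)))" if i: "i < n" and k: "k < n" for i k y
  proof (cases "i = k")
    case True then show ?thesis by simp
  next
    case False
    have "B i (A i (B k (A k y))) = B i (B k (A i (A k y)))" using AB[OF i k] False by simp
    also have "\<dots> = B k (B i (A k (A i y)))" using BB[OF i k] AA[OF i k] by simp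
    also have "\<dots> = B k (A k (B i (A i y)))" using AB[OF k i] False by simp
    finally show ?thesis .
  qed
  obtain x where x: "x \<in> S" "x \<noteq> 0" "\<forall>i<n. \<exists>r. B i (A i x) = sc r x"
    using common_eigen[OF vs, of n "\<lambda>i y. B i (A i y)" S Bs] T_hom Tcomm subS Tpres Bs ne S
    unfolding S_def by blast
  then obtain \<tau> where \<tau>: "\<forall>i<n. B i (A i x) = sc (\<tau> i) x" by metis
  have Hx: "H x = sc lam x" using x(1) by (simp add: S_def)
  have Hx': "- H x = sc (- lam) x" using Hx by simp
  have S': "{y. - H y = sc (- lam) y} \<subseteq> span Bs" using S by (auto simp: minus_equation_iff)
  have Tx': "A i (B i x) = sc (\<tau> i + gg i) x" if i: "i < n" for i
    using AB[OF i i, of x] \<tau> i by (simp add: scale_left_distrib)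
  have "\<exists>M0. \<forall>M\<ge>M0. \<forall>i<n. i \<noteq> 0 \<longrightarrow> (B 0 ^^ M) x \<in> NA i \<and> (A 0 ^^ M) x \<in> sw.NA i"
  proof (rule combine_bounds)
    fix i assume i: "i < n" and i0: "i \<noteq> 0"
    obtain M1 where M1: "\<forall>M\<ge>M1. (B 0 ^^ M) x \<in> NA i"
      using star[OF i n0 i0 Bs S Hx] \<tau> i by blast
    obtain M2 where M2: "\<forall>M\<ge>M2. (A 0 ^^ M) x \<in> sw.NA i"
      using sw.star[OF i n0 i0 Bs S' Hx' Tx'[OF i]] by blast
    show "\<exists>M0. \<forall>M\<ge>M0. (B 0 ^^ M) x \<in> NA i \<and> (A 0 ^^ M) x \<in> sw.NA i"
      using M1 M2 by (intro exI[of _ "max M1 M2"]) auto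
  qed
  then obtain M0 where M0: "\<forall>M\<ge>M0. \<forall>i<n. i \<noteq> 0 \<longrightarrow> (B 0 ^^ M) x \<in> NA i \<and> (A 0 ^^ M) x \<in> sw.NA i"
    by blast
  have M0a: "\<forall>M\<ge>M0. \<forall>i<n. i \<noteq> 0 \<longrightarrow> (B 0 ^^ M) x \<in> NA i \<and> (\<exists>k. (B i ^^ k) ((A 0 ^^ M) x) = 0)"
    using M0 by (simp add: sw.NA_def)
  have M0b: "\<forall>M\<ge>M0. \<forall>i<n. i \<noteq> 0 \<longrightarrow> (A 0 ^^ M) x \<in> sw.NA i \<and> (\<exists>k. (A i ^^ k) ((B 0 ^^ M) x) = 0)"
    using M0 by (simp add: NA_def)
  have T0: "B 0 (A 0 x) = sc (\<tau> 0) x" using \<tau> n0 by blast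
  show ?thesis
  proof (cases "x \<in> NA 0 \<or> (\<exists>k::nat. B 0 (A 0 x) = sc (of_nat k * gg 0) x)")
    case True
    from half[OF n0 x(2) Hx M0a True] show ?thesis using OA_good OB_good by blast
  next
    case C1: False
    show ?thesis
    proof (cases "x \<in> sw.NA 0 \<or> (\<exists>k::nat. A 0 (B 0 x) = sc (of_nat k * (- gg 0)) x)")
      case True
      from sw.half[OF n0 x(2) Hx' M0b True]
      obtain y c where y: "y \<noteq> 0" "- H y = sc c y"
        "(\<forall>i<n. y \<in> sw.NA i) \<or> (\<forall>i<n. \<exists>k. (A i ^^ k) y = 0)" by blast
      have Hy: "H y = sc (- c) y" using y(2) by (metis minus_equation_iff scale_minus_left)
      show ?thesis
      proof (cases "\<forall>i<n. y \<in> sw.NA i")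
        case True
        then show ?thesis using OB_good[OF y(1) Hy] by (simp add: sw.NA_def)
      next
        case False
        then have "\<forall>i<n. \<exists>k. (A i ^^ k) y = 0" using y(3) by blast
        then have "\<forall>i<n. y \<in> NA i" by (simp add: NA_def)
        then show ?thesis using OA_good[OF y(1) Hy] by blast
      qed
    next
      case C2: False
      have nonint: "\<tau> 0 \<noteq> of_int k * gg 0" for k :: int
      proof
        assume eq: "\<tau> 0 = of_int k * gg 0"
        show False
        proof (cases "0 \<le> k")
          case True
          then have "B 0 (A 0 x) = sc (of_nat (nat k) * gg 0) x" using T0 eq by simp
          then show False using C1 by blast
        next
          case False
          have "A 0 (B 0 x) = sc (\<tau> 0 + gg 0) x" by (rule Tx'[OF n0])
          also have "\<tau> 0 + gg 0 = of_nat (nat (- k - 1)) * (- gg 0)"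
            using False eq by (simp add: algebra_simps)
          finally show False using C2 by blast
        qed
      qed
      show ?thesis
      proof (cases "n = 1")
        case True
        interpret d: dn sc n H A B gg w x lam "\<tau> 0"
          by unfold_locales (use True x(2) Hx T0 nonint in auto)
        show ?thesis using d.dn_good by blast
      next
        case False
        then have n1: "1 < n" using n0 by simp
        obtain c where c: "c \<noteq> 0" "(A 0 ^^ M0) ((B 0 ^^ M0) x) = sc c x"
          using prodpow[OF n0 T0 nonint] by blast
        have nonint': "\<tau> 0 + gg 0 \<noteq> of_int k * (- gg 0)" for k :: int
        proof
          assume "\<tau> 0 + gg 0 = of_int k * (- gg 0)"
          then have "\<tau> 0 = of_int (- k - 1) * gg 0" by (simp add: algebra_simps)
          then show False using nonint by blast
        qed
        obtain c' where c': "c' \<noteq> 0" "(B 0 ^^ M0) ((A 0 ^^ M0) x) = sc c' x"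
          using sw.prodpow[OF n0 Tx'[OF n0] nonint'] by blast
        have "(B 0 ^^ M0) x \<in> NA 1" using M0 n1 by simp
        then have "(A 0 ^^ M0) ((B 0 ^^ M0) x) \<in> NA 1" by (rule NA_Apow[OF n1 n0])
        then have xA: "x \<in> NA 1" using c NA_scale_iff[OF n1] by simp
        have "(A 0 ^^ M0) x \<in> sw.NA 1" using M0 n1 by simp
        then have "(B 0 ^^ M0) ((A 0 ^^ M0) x) \<in> sw.NA 1" by (rule sw.NA_Apow[OF n1 n0])
        then have "x \<in> sw.NA 1" using c' sw.NA_scale_iff[OF n1] by simp
        then have "\<exists>k. (B 1 ^^ k) x = 0" by (simp add: sw.NA_def)
        from NA_NB_disj[OF n1 xA this] x(2) show ?thesis by simp
      qed
    qed
  qed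
qed

end

lemma P_cases:
  fixes n k :: nat
  assumes "k < 2 * n"
  shows "k < n \<or> (\<exists>i<n. k = 2 * n - 1 - i)"
proof (cases "k < n")
  case False
  then show ?thesis using assms by (intro disjI2 exI[of _ "2 * n - 1 - k"]) auto
qed simp

theorem mainTheorem16:
  fixes sc :: "complex \<Rightarrow> 'v::ab_group_add \<Rightarrow> 'v"
    and n :: nat
    and H Z :: "'v \<Rightarrow> 'v"
    and P :: "nat \<Rightarrow> 'v \<Rightarrow> 'v"
  assumes n: "n \<ge> 1"
    and rep: "heis_rep sc n H P Z"
    and wt: "weight_module sc H"
    and fdws: "\<exists>lam. weight_space sc H lam \<noteq> {0} \<and> fin_dim sc (weight_space sc H lam)"
    and zscalar: "\<exists>c. c \<noteq> 0 \<and> (\<forall>v. Z v = sc c v)"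
  shows "\<exists>W. full_submodule sc n H P Z W \<and> heis_simple sc n P Z W \<and>
             (\<forall>lam. fin_dim sc (W \<inter> weight_space sc H lam))"
proof -
  from zscalar obtain c where c: "c \<noteq> 0" "\<And>v. Z v = sc c v" by blast
  from rep have vs: "vector_space sc" and linH: "Vector_Spaces.linear sc sc H"
    and linP: "\<And>k. k < 2 * n \<Longrightarrow> Vector_Spaces.linear sc sc (P k)"
    and HP: "\<And>k v. k < 2 * n \<Longrightarrow> H (P k v) - P k (H v) = sc (2 * (of_nat n - 1/2 - of_nat k)) (P k v)"
    and PP: "\<And>k k' v. k < 2 * n \<Longrightarrow> k' < 2 * n \<Longrightarrow> P k (P k' v) - P k' (P k v)
        = (if k + k' = 2*n - 1 then sc ((-1) ^ (k + n) * of_nat (fact k * fact (2*n - 1 - k))) (Z v) else 0)"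
    unfolding heis_rep_def by blast+
  interpret vector_space sc by (rule vs)
  define A where "A i = P i" for i
  define B where "B i = P (2 * n - 1 - i)" for i
  define gg where "gg i = (-1) ^ (i + n) * of_nat (fact i * fact (2*n - 1 - i)) * c" for i
  define w where "w i = 2 * n - 1 - 2 * i" for i
    have f1: "vector_space sc" by (rule vs)
    have f2: "module_hom sc sc H" using linH by (simp add: module_hom_iff_linear)
    have f3: "module_hom sc sc (A i)" if "i < n" for i
      using linP[of i] that by (simp add: module_hom_iff_linear A_def)
    have f4: "module_hom sc sc (B i)" if "i < n" for i
      using linP[of "2 * n - 1 - i"] that by (simp add: module_hom_iff_linear B_def)
    have f5: "gg i \<noteq> 0" if "i < n" for i using c(1) by (simp add: gg_def)
    have f6: "1 \<le> w i" if "i < n" for i using that by (simp add: w_def)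
    have f7: "H (A i x) = A i (H x) + sc (of_nat (w i)) (A i x)" if i: "i < n" for i x
    proof -
      have e: "(of_nat (w i) :: complex) = 2 * (of_nat n - 1/2 - of_nat i)"
        using i by (simp add: w_def of_nat_diff algebra_simps)
      have i2: "i < 2 * n" using i by simp
      have "H (P i x) - P i (H x) = sc (of_nat (w i)) (P i x)"
        unfolding e by (rule HP[OF i2])
      then show ?thesis unfolding A_def by (metis diff_add_cancel add.commute)
    qed
    have f8: "H (B i x) = B i (H x) - sc (of_nat (w i)) (B i x)" if i: "i < n" for i x
    proof -
      have e: "(2 * (of_nat n - 1/2 - of_nat (2 * n - 1 - i)) :: complex) = - of_nat (w i)"
        using i by (simp add: w_def of_nat_diff algebra_simps)
      have i2: "2 * n - 1 - i < 2 * n" using i by simp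
      have "H (P (2 * n - 1 - i) x) - P (2 * n - 1 - i) (H x) = sc (- of_nat (w i)) (P (2 * n - 1 - i) x)"
        unfolding e[symmetric] by (rule HP[OF i2])
      then have "H (P (2 * n - 1 - i) x) - P (2 * n - 1 - i) (H x) = - sc (of_nat (w i)) (P (2 * n - 1 - i) x)"
        by simp
      then show ?thesis unfolding B_def by (metis diff_add_cancel uminus_add_conv_diff)
    qed
    have f9: "A i (B k x) = B k (A i x) + (if i = k then sc (gg i) x else 0)" if i: "i < n" and k: "k < n" for i k x
    proof -
      have iff: "i + (2 * n - 1 - k) = 2 * n - 1 \<longleftrightarrow> i = k" using i k by auto
      have "A i (B k x) - B k (A i x) = (if i = k then sc (gg i) x else 0)"
        using PP[of i "2 * n - 1 - k" x] i k iff by (simp add: A_def B_def c(2) gg_def mult.assoc)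
      then show ?thesis by (metis diff_add_cancel add.commute)
    qed
    have f10: "A i (A k x) = A k (A i x)" if i: "i < n" and k: "k < n" for i k x
    proof -
      have "i + k \<noteq> 2 * n - 1" using i k by simp
      then have "P i (P k x) - P k (P i x) = 0" using PP[of i k x] i k by simp
      then show ?thesis by (simp add: A_def)
    qed
    have f11: "B i (B k x) = B k (B i x)" if i: "i < n" and k: "k < n" for i k x
    proof -
      have "(2 * n - 1 - i) + (2 * n - 1 - k) \<noteq> 2 * n - 1" using i k by simp
      then have "P (2 * n - 1 - i) (P (2 * n - 1 - k) x) - P (2 * n - 1 - k) (P (2 * n - 1 - i) x) = 0"
        using PP[of "2 * n - 1 - i" "2 * n - 1 - k" x] i k by simp
      then show ?thesis by (simp add: B_def)
    qed
  have W: "weyl sc n H A B gg w"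
    unfolding weyl_def using f1 f2 f3 f4 f5 f6 f7 f8 f9 f10 f11 by blast
  from fdws obtain lam Bs where lam: "weight_space sc H lam \<noteq> {0}" "finite Bs"
    "weight_space sc H lam \<subseteq> span Bs" by (auto simp: fin_dim_def)
  from weyl.weyl_main[OF W, of lam Bs] lam n obtain Wm where G: "good sc n H A B Wm"
    by (auto simp: weight_space_def)
  have sub: "subspace Wm" using G by (simp add: good_def)
  have stab: "\<forall>i<n. A i ` Wm \<subseteq> Wm \<and> B i ` Wm \<subseteq> Wm" using G by (simp add: good_def)
  have Pst: "P k ` Wm \<subseteq> Wm" if k: "k < 2 * n" for k
    using P_cases[OF k] stab by (auto simp: A_def B_def)
  have Zst: "Z ` Wm \<subseteq> Wm" using sub by (auto simp: c(2) subspace_scale)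
  have hs: "heis_submodule sc n P Z Wm" using sub Pst Zst by (simp add: heis_submodule_def)
  have full: "full_submodule sc n H P Z Wm" using hs G by (simp add: full_submodule_def good_def)
  have simple: "heis_simple sc n P Z Wm"
    unfolding heis_simple_def
  proof (intro conjI allI impI)
    show "heis_submodule sc n P Z Wm" by (rule hs)
    show "Wm \<noteq> {0}" using G by (simp add: good_def)
    fix U assume U: "U \<subseteq> Wm \<and> heis_submodule sc n P Z U"
    then have "\<forall>i<n. A i ` U \<subseteq> U \<and> B i ` U \<subseteq> U"
      by (auto simp: heis_submodule_def A_def B_def)
    then show "U = {0} \<or> U = Wm" using G U by (auto simp: good_def heis_submodule_def)
  qed
  have "fin_dim sc (Wm \<inter> weight_space sc H \<nu>)" for \<nu>
    using G by (auto simp: good_def fin_dim_def weight_space_def)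
  then show ?thesis using full simple by blast
qed


end
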